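(* There exists a constant $c>0$ such that for every integer $k\geq 2$ and every graph $G$ with $\operatorname{tw}(G)\geq ck^4\log^{5/2}(k)$, we have $\operatorname{tw}(G\times K_2)\geq k$.
   Context: $\operatorname{tw}$ denotes treewidth. The direct product $G \times H$ has vertex set $V(G)\times V(H)$, with $(a,v)(b,u)$ an edge iff $ab\in E(G)$ and $uv\in E(H)$; $K_2$ is the graph with two adjacent vertices. *)

theory Defs
  imports Complex_Main
begin

type_synonym 'a graph = "'a set \<times> ('a \<times> 'a) set"

definition verts :: "'a graph \<Rightarrow> 'a set" where "verts G = fst G"
definition edges :: "'a graph \<Rightarrow> ('a \<times> 'a) set" where "edges G = snd G"

definition is_graph :: "'a graph \<Rightarrow> bool" where
  "is_graph G \<longleftrightarrow> finite (verts G) \<and> edges G \<subseteq> verts G \<times> verts G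
     \<and> (\<forall>x y. (x, y) \<in> edges G \<longrightarrow> (y, x) \<in> edges G)
     \<and> (\<forall>x. (x, x) \<notin> edges G)"

definition connected_in :: "'a graph \<Rightarrow> 'a set \<Rightarrow> bool" where
  "connected_in G S \<longleftrightarrow> (\<forall>x\<in>S. \<forall>y\<in>S. (x, y) \<in> (edges G \<inter> (S \<times> S))\<^sup>*)"

definition is_cycle :: "'a graph \<Rightarrow> 'a list \<Rightarrow> bool" where
  "is_cycle G vs \<longleftrightarrow> length vs \<ge> 3 \<and> distinct vs \<and> set vs \<subseteq> verts G
     \<and> (\<forall>i < length vs - 1. (vs ! i, vs ! Suc i) \<in> edges G)
     \<and> (last vs, hd vs) \<in> edges G"

definition is_tree :: "'a graph \<Rightarrow> bool" where
  "is_tree T \<longleftrightarrow> is_graph T \<and> verts T \<noteq> {} \<and> connected_in T (verts T)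
     \<and> (\<nexists>vs. is_cycle T vs)"

definition tree_decomposition :: "'a graph \<Rightarrow> nat graph \<Rightarrow> (nat \<Rightarrow> 'a set) \<Rightarrow> bool" where
  "tree_decomposition G T B \<longleftrightarrow> is_tree T
     \<and> (\<forall>t\<in>verts T. B t \<subseteq> verts G)
     \<and> (\<forall>v\<in>verts G. \<exists>t\<in>verts T. v \<in> B t)
     \<and> (\<forall>(u, v)\<in>edges G. \<exists>t\<in>verts T. u \<in> B t \<and> v \<in> B t)
     \<and> (\<forall>v\<in>verts G. connected_in T {t\<in>verts T. v \<in> B t})"

definition decomp_width :: "nat graph \<Rightarrow> (nat \<Rightarrow> 'a set) \<Rightarrow> nat" where
  "decomp_width T B = Max ((\<lambda>t. card (B t)) ` verts T) - 1"

definition treewidth :: "'a graph \<Rightarrow> nat" where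
  "treewidth G = (LEAST w. \<exists>T B. tree_decomposition G T B \<and> decomp_width T B = w)"

definition direct_product :: "'a graph \<Rightarrow> 'b graph \<Rightarrow> ('a \<times> 'b) graph" where
  "direct_product G H = (verts G \<times> verts H,
     {((a, v), (b, u)). (a, b) \<in> edges G \<and> (v, u) \<in> edges H})"

definition K2 :: "bool graph" where
  "K2 = (UNIV, {(x, y). x \<noteq> y})"

end

theory Submission
  imports Defs
begin


fun wk :: "('a \<times> 'a) set \<Rightarrow> 'a list \<Rightarrow> bool" where
  "wk E [] = True"
| "wk E [x] = True"
| "wk E (x # y # xs) = ((x, y) \<in> E \<and> wk E (y # xs))"

lemma wk_nth: "wk E p \<longleftrightarrow> (\<forall>i. Suc i < length p \<longrightarrow> (p ! i, p ! Suc i) \<in> E)"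
proof (induction E p rule: wk.induct)
  case (3 E x y xs)
  show ?case
  proof
    assume "wk E (x # y # xs)"
    with 3 show "\<forall>i. Suc i < length (x # y # xs) \<longrightarrow> ((x # y # xs) ! i, (x # y # xs) ! Suc i) \<in> E"
      by (auto simp: nth_Cons split: nat.splits)
  next
    assume h: "\<forall>i. Suc i < length (x # y # xs) \<longrightarrow> ((x # y # xs) ! i, (x # y # xs) ! Suc i) \<in> E"
    have "(x, y) \<in> E" using h[rule_format, of 0] by simp
    moreover have "\<forall>i. Suc i < length (y # xs) \<longrightarrow> ((y # xs) ! i, (y # xs) ! Suc i) \<in> E"
      using h by (metis Suc_less_eq length_Cons nth_Cons_Suc)
    ultimately show "wk E (x # y # xs)" using 3 by simp
  qed
qed auto

lemma wk_append: "wk E (xs @ ys) \<longleftrightarrow> wk E xs \<and> wk E ys \<and> (xs \<noteq> [] \<longrightarrow> ys \<noteq> [] \<longrightarrow> (last xs, hd ys) \<in> E)"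
proof (induction xs)
  case Nil then show ?case by simp
next
  case (Cons x xs)
  then show ?case by (cases xs; cases ys) auto
qed

lemma wk_take: "wk E p \<Longrightarrow> wk E (take n p)"
  unfolding wk_nth by auto

lemma rt_mono: "(x, y) \<in> (E \<inter> S \<times> S)\<^sup>* \<Longrightarrow> S \<subseteq> S' \<Longrightarrow> E \<subseteq> E' \<Longrightarrow> (x, y) \<in> (E' \<inter> S' \<times> S')\<^sup>*"
  by (erule rtrancl_mono[THEN subsetD, rotated]) auto

lemma rt_sym: "sym E \<Longrightarrow> (x, y) \<in> (E \<inter> S \<times> S)\<^sup>* \<Longrightarrow> (y, x) \<in> (E \<inter> S \<times> S)\<^sup>*"
proof -
  assume "sym E" "(x, y) \<in> (E \<inter> S \<times> S)\<^sup>*"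
  moreover have "sym (E \<inter> S \<times> S)" using \<open>sym E\<close> by (auto simp: sym_def)
  ultimately show ?thesis by (meson sym_rtrancl symD)
qed

lemma rt_in: "(x, y) \<in> (E \<inter> S \<times> S)\<^sup>* \<Longrightarrow> x \<in> S \<Longrightarrow> y \<in> S"
  by (induction rule: rtrancl_induct) auto

lemma reach_sub:
  assumes "z0 \<in> S" "(z0, z) \<in> (E \<inter> S \<times> S)\<^sup>*"
  shows "(z0, z) \<in> (E \<inter> {z\<in>S. (z0, z) \<in> (E \<inter> S \<times> S)\<^sup>*} \<times> {z\<in>S. (z0, z) \<in> (E \<inter> S \<times> S)\<^sup>*})\<^sup>*"
  using assms(2)
proof (induction rule: rtrancl_induct)
  case base then show ?case by simp
next
  case (step y z)
  then have "y \<in> S" using rt_in assms(1) by fast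
  let ?C = "{z\<in>S. (z0, z) \<in> (E \<inter> S \<times> S)\<^sup>*}"
  have zS: "z \<in> S" using step.hyps(2) by blast
  have "(z0, z) \<in> (E \<inter> S \<times> S)\<^sup>*" using step.hyps by (rule rtrancl_into_rtrancl)
  then have "(y, z) \<in> E \<inter> ?C \<times> ?C" using step.hyps \<open>y \<in> S\<close> zS by blast
  then show ?case by (rule rtrancl_into_rtrancl[OF step.IH])
qed

lemma reach_conn:
  assumes "sym (edges G)" "z0 \<in> S"
  shows "connected_in G {z\<in>S. (z0, z) \<in> (edges G \<inter> S \<times> S)\<^sup>*}"
  unfolding connected_in_def
proof (intro ballI)
  let ?C = "{z\<in>S. (z0, z) \<in> (edges G \<inter> S \<times> S)\<^sup>*}"
  fix x y assume x: "x \<in> ?C" and y: "y \<in> ?C"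
  have "(z0, x) \<in> (edges G \<inter> ?C \<times> ?C)\<^sup>*" using reach_sub[OF assms(2)] x by blast
  then have "(x, z0) \<in> (edges G \<inter> ?C \<times> ?C)\<^sup>*" using rt_sym assms(1) by fast
  moreover have "(z0, y) \<in> (edges G \<inter> ?C \<times> ?C)\<^sup>*" using reach_sub[OF assms(2)] y by blast
  ultimately show "(x, y) \<in> (edges G \<inter> ?C \<times> ?C)\<^sup>*" by simp
qed

lemma conn_union:
  assumes "connected_in G S1" "connected_in G S2" "S1 \<inter> S2 \<noteq> {}"
  shows "connected_in G (S1 \<union> S2)"
  unfolding connected_in_def
proof (intro ballI)
  obtain z where z: "z \<in> S1" "z \<in> S2" using assms(3) by blast
  have m1: "(a, b) \<in> (edges G \<inter> (S1 \<union> S2) \<times> (S1 \<union> S2))\<^sup>*" if "a \<in> S1" "b \<in> S1" for a b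
  proof -
    have "(a, b) \<in> (edges G \<inter> S1 \<times> S1)\<^sup>*" using assms(1) that unfolding connected_in_def by blast
    then show ?thesis by (rule rt_mono) auto
  qed
  have m2: "(a, b) \<in> (edges G \<inter> (S1 \<union> S2) \<times> (S1 \<union> S2))\<^sup>*" if "a \<in> S2" "b \<in> S2" for a b
  proof -
    have "(a, b) \<in> (edges G \<inter> S2 \<times> S2)\<^sup>*" using assms(2) that unfolding connected_in_def by blast
    then show ?thesis by (rule rt_mono) auto
  qed
  fix x y assume "x \<in> S1 \<union> S2" "y \<in> S1 \<union> S2"
  then show "(x, y) \<in> (edges G \<inter> (S1 \<union> S2) \<times> (S1 \<union> S2))\<^sup>*"
  proof -
    have "(x, z) \<in> (edges G \<inter> (S1 \<union> S2) \<times> (S1 \<union> S2))\<^sup>*"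
    proof (cases "x \<in> S1")
      case True then show ?thesis using m1 z by blast
    next
      case False then show ?thesis using m2 z \<open>x \<in> S1 \<union> S2\<close> by blast
    qed
    moreover have "(z, y) \<in> (edges G \<inter> (S1 \<union> S2) \<times> (S1 \<union> S2))\<^sup>*"
    proof (cases "y \<in> S1")
      case True then show ?thesis using m1 z by blast
    next
      case False then show ?thesis using m2 z \<open>y \<in> S1 \<union> S2\<close> by blast
    qed
    ultimately show ?thesis by (rule rtrancl_trans)
  qed
qed

lemma conn_mono_edges:
  "connected_in G S \<Longrightarrow> edges G \<subseteq> edges G' \<Longrightarrow> connected_in G' S"
  unfolding connected_in_def using rt_mono[of _ _ "edges G" S S "edges G'"] by blast

lemma path_extract:
  assumes "(a, b) \<in> (E \<inter> S \<times> S)\<^sup>*" "a \<in> S"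
  shows "\<exists>p. p \<noteq> [] \<and> hd p = a \<and> last p = b \<and> distinct p \<and> set p \<subseteq> S \<and> wk E p"
  using assms(1)
proof (induction rule: rtrancl_induct)
  case base then show ?case using assms(2) by (intro exI[of _ "[a]"]) auto
next
  case (step y z)
  then obtain p where p: "p \<noteq> []" "hd p = a" "last p = y" "distinct p" "set p \<subseteq> S" "wk E p" by blast
  show ?case
  proof (cases "z \<in> set p")
    case True
    then obtain k where k: "k < length p" "p ! k = z" by (meson in_set_conv_nth)
    let ?q = "take (Suc k) p"
    have "?q \<noteq> []" using p(1) by simp
    moreover have "hd ?q = a" using p(1,2) by (simp add: hd_take)
    moreover have "last ?q = z" using k by (simp add: take_Suc_conv_app_nth)
    moreover have "distinct ?q" using p(4) by simp
    moreover have "set ?q \<subseteq> S" using p(5) set_take_subset by fast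
    moreover have "wk E ?q" using p(6) wk_take by fast
    ultimately show ?thesis by blast
  next
    case False
    let ?q = "p @ [z]"
    have "wk E ?q" using p step(2) by (simp add: wk_append)
    then show ?thesis using p False step(2) by (intro exI[of _ ?q]) auto
  qed
qed

lemma first_exit:
  assumes "(y, z) \<in> (E \<inter> S \<times> S)\<^sup>*" "y \<in> S'" "z \<notin> S'" "S' \<subseteq> S"
  shows "\<exists>a b. (y, a) \<in> (E \<inter> S' \<times> S')\<^sup>* \<and> (a, b) \<in> E \<and> b \<in> S - S'"
  using assms(1,2)
proof (induction rule: converse_rtrancl_induct)
  case base then show ?case using assms(3) by simp
next
  case (step y u)
  show ?case
  proof (cases "u \<in> S'")
    case True
    then obtain a b where ab: "(u, a) \<in> (E \<inter> S' \<times> S')\<^sup>*" "(a, b) \<in> E" "b \<in> S - S'" using step by blast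
    have "(y, u) \<in> E \<inter> S' \<times> S'" using step True by auto
    then have "(y, a) \<in> (E \<inter> S' \<times> S')\<^sup>*" using ab(1) by (meson converse_rtrancl_into_rtrancl)
    then show ?thesis using ab by blast
  next
    case False
    then show ?thesis using step by blast
  qed
qed



lemma is_cycle_wk: "is_cycle G vs \<longleftrightarrow> length vs \<ge> 3 \<and> distinct vs \<and> set vs \<subseteq> verts G
     \<and> wk (edges G) vs \<and> (last vs, hd vs) \<in> edges G"
  unfolding is_cycle_def wk_nth by (auto simp: less_diff_conv)

lemma graph_edge_verts: "is_graph G \<Longrightarrow> (x, y) \<in> edges G \<Longrightarrow> x \<in> verts G \<and> y \<in> verts G"
  unfolding is_graph_def by blast

lemma graph_sym: "is_graph G \<Longrightarrow> sym (edges G)"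
  unfolding is_graph_def sym_def by blast

lemma graph_irrefl: "is_graph G \<Longrightarrow> (x, x) \<notin> edges G"
  unfolding is_graph_def by blast

lemma wk_Cons: "wk E (x # q) \<longleftrightarrow> wk E q \<and> (q \<noteq> [] \<longrightarrow> (x, hd q) \<in> E)"
  by (cases q) auto

lemma cyc3:
  assumes G: "is_graph T" and e1: "(t, t') \<in> edges T" and e2: "(a, t') \<in> edges T"
    and e3: "(b, t) \<in> edges T" and p: "(b, a) \<in> (edges T \<inter> S \<times> S)\<^sup>*" and "b \<in> S"
    and "t \<notin> S" "t' \<notin> S" "S \<subseteq> verts T"
  shows "\<exists>vs. is_cycle T vs"
proof -
  obtain p where p: "p \<noteq> []" "hd p = b" "last p = a" "distinct p" "set p \<subseteq> S" "wk (edges T) p"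
    using path_extract[OF p \<open>b \<in> S\<close>] by blast
  let ?vs = "[t] @ (p @ [t'])"
  have tb: "(t, b) \<in> edges T" using e3 G unfolding is_graph_def by blast
  have tt: "(t', t) \<in> edges T" using e1 G unfolding is_graph_def by blast
  have "wk (edges T) (p @ [t'])" using p e2 by (simp add: wk_append)
  then have "wk (edges T) ?vs" using p tb by (simp add: wk_Cons hd_append)
  moreover have "distinct ?vs" using p assms(7,8) graph_irrefl[OF G, of t] e1 by auto
  moreover have "set ?vs \<subseteq> verts T" using p assms(9) graph_edge_verts[OF G e1] by auto
  moreover have "length ?vs \<ge> 3" using p(1) by (cases p) auto
  ultimately have "is_cycle T ?vs" using tt unfolding is_cycle_wk by simp
  then show ?thesis by blast
qed

lemma walk_cycle:
  assumes G: "is_graph T" and w: "\<forall>i. w i \<in> verts T" "\<forall>i. (w i, w (Suc i)) \<in> edges T"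
    "\<forall>i. w (Suc (Suc i)) \<noteq> w i"
  shows "\<exists>vs. is_cycle T vs"
proof -
  have fin: "finite (verts T)" using G unfolding is_graph_def by blast
  have "\<not> inj_on w {0..card (verts T)}"
  proof
    assume "inj_on w {0..card (verts T)}"
    then have "card (w ` {0..card (verts T)}) = Suc (card (verts T))" by (simp add: card_image)
    moreover have "card (w ` {0..card (verts T)}) \<le> card (verts T)"
      by (rule card_mono[OF fin]) (use w in auto)
    ultimately show False by simp
  qed
  then obtain i j where "i \<noteq> j" "w i = w j" unfolding inj_on_def by blast
  then have ex: "\<exists>j. \<exists>i<j. w i = w j" by (metis linorder_neqE_nat)
  define j0 where "j0 = (LEAST j. \<exists>i<j. w i = w j)"
  have "\<exists>i<j0. w i = w j0" unfolding j0_def using LeastI_ex[OF ex] .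
  then obtain i0 where i0: "i0 < j0" "w i0 = w j0" by blast
  have minj: "w a \<noteq> w b" if "a < b" "b < j0" for a b
    using that not_less_Least[of b "\<lambda>j. \<exists>i<j. w i = w j"] unfolding j0_def by blast
  let ?vs = "map w [i0..<j0]"
  have inj: "inj_on w {i0..<j0}" unfolding inj_on_def
    by (metis atLeastLessThan_iff linorder_neqE_nat minj)
  have d: "distinct ?vs" using inj by (simp add: distinct_map)
  have "j0 \<noteq> Suc i0" using i0 graph_irrefl[OF G] w(2) by metis
  moreover have "j0 \<noteq> Suc (Suc i0)" using i0 w(3) by metis
  ultimately have len: "length ?vs \<ge> 3" using i0 by simp
  have "wk (edges T) ?vs" unfolding wk_nth using w(2)
    by (simp add: nth_map_upt add.commute)
  moreover have "set ?vs \<subseteq> verts T" using w(1) by auto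
  moreover have "(last ?vs, hd ?vs) \<in> edges T"
  proof -
    have "last ?vs = w (j0 - 1)" using i0 by (simp add: last_map)
    moreover have "hd ?vs = w (Suc (j0 - 1))" using i0 by (simp add: hd_map)
    ultimately show ?thesis using w(2) by simp
  qed
  ultimately have "is_cycle T ?vs" using d len unfolding is_cycle_wk by simp
  then show ?thesis by blast
qed



lemma verts_pair[simp]: "verts (V, E) = V" and edges_pair[simp]: "edges (V, E) = E"
  by (simp_all add: verts_def edges_def)

lemma distinct_small: "distinct vs \<Longrightarrow> set vs \<subseteq> A \<Longrightarrow> finite A \<Longrightarrow> length vs \<le> card A"
  by (metis card_mono distinct_card)

lemma tree_single: "is_tree ({n}, {})"
proof -
  have "\<not> is_cycle ({n}, {}) vs" for vs
  proof
    assume "is_cycle ({n}, {}) vs"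
    then have "distinct vs" "set vs \<subseteq> {n}" "length vs \<ge> 3" unfolding is_cycle_def by auto
    then show False using distinct_small[of vs "{n}"] by simp
  qed
  then show ?thesis unfolding is_tree_def is_graph_def connected_in_def by auto
qed

lemma tree_edge: assumes "a \<noteq> b" shows "is_tree ({a, b}, {(a, b), (b, a)})"
proof -
  have "\<not> is_cycle ({a, b}, {(a, b), (b, a)}) vs" for vs
  proof
    assume "is_cycle ({a, b}, {(a, b), (b, a)}) vs"
    then have "distinct vs" "set vs \<subseteq> {a, b}" "length vs \<ge> 3" unfolding is_cycle_def by auto
    then have "length vs \<le> card {a, b}" using distinct_small[of vs "{a, b}"] by simp
    moreover have "card {a, b} \<le> 2" by (simp add: card_insert_if)
    ultimately show False using \<open>length vs \<ge> 3\<close> by simp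
  qed
  moreover have "connected_in ({a, b}, {(a, b), (b, a)}) {a, b}"
    unfolding connected_in_def by (auto intro: r_into_rtrancl)
  ultimately show ?thesis using assms unfolding is_tree_def is_graph_def by auto
qed

lemma rt_image: "(x, y) \<in> (E \<inter> S \<times> S)\<^sup>* \<Longrightarrow> (f x, f y) \<in> (map_prod f f ` E \<inter> f ` S \<times> f ` S)\<^sup>*"
proof (induction rule: rtrancl_induct)
  case base then show ?case by simp
next
  case (step y z)
  then have "(f y, f z) \<in> map_prod f f ` E \<inter> f ` S \<times> f ` S" by auto
  with step.IH show ?case by (rule rtrancl_into_rtrancl)
qed

lemma conn_image: "connected_in (V, E) S \<Longrightarrow> connected_in (V', map_prod f f ` E) (f ` S)"
  unfolding connected_in_def using rt_image by fastforce

lemma wk_pull: "wk (map_prod f f ` E) vs \<Longrightarrow> set vs \<subseteq> f ` V \<Longrightarrow> inj_on f V \<Longrightarrow> E \<subseteq> V \<times> V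
   \<Longrightarrow> wk E (map (inv_into V f) vs)"
proof (induction "map_prod f f ` E" vs rule: wk.induct)
  case (3 x y xs)
  have "(x, y) \<in> map_prod f f ` E" using 3(2) by simp
  then obtain a b where ab: "(a, b) \<in> E" "x = f a" "y = f b" by auto
  have abV: "a \<in> V" "b \<in> V" using ab(1) 3(5) by auto
  have g: "inv_into V f x = a" "inv_into V f y = b" using ab abV inv_into_f_f[OF 3(4)] by auto
  have "wk E (map (inv_into V f) (y # xs))" using 3 by simp
  then show ?case using g ab(1) by simp
qed auto

lemma tree_rename:
  assumes T: "is_tree (V, E)" and inj: "inj_on f V"
  shows "is_tree (f ` V, map_prod f f ` E)"
proof -
  have G: "is_graph (V, E)" using T unfolding is_tree_def by blast
  then have EV: "E \<subseteq> V \<times> V" unfolding is_graph_def by simp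
  have "is_graph (f ` V, map_prod f f ` E)"
    using G inj unfolding is_graph_def inj_on_def by (auto, blast+)
  moreover have "connected_in (f ` V, map_prod f f ` E) (f ` V)"
    using T conn_image unfolding is_tree_def by fastforce
  moreover have "\<not> is_cycle (f ` V, map_prod f f ` E) vs" for vs
  proof
    assume c: "is_cycle (f ` V, map_prod f f ` E) vs"
    let ?g = "inv_into V f"
    have sv: "set vs \<subseteq> f ` V" using c unfolding is_cycle_def by simp
    have "wk E (map ?g vs)" using c sv inj EV wk_pull unfolding is_cycle_wk by fastforce
    moreover have "distinct (map ?g vs)"
      using c sv inj unfolding is_cycle_def
      by (simp add: distinct_map inj_on_subset[OF inj_on_inv_into[of "f ` V" f V]])
    moreover have "set (map ?g vs) \<subseteq> V" using sv by (auto simp: inv_into_into)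
    moreover have "(last (map ?g vs), hd (map ?g vs)) \<in> E"
    proof -
      have ne: "vs \<noteq> []" using c unfolding is_cycle_def by auto
      have "(last vs, hd vs) \<in> map_prod f f ` E" using c unfolding is_cycle_def by simp
      then obtain a b where ab: "(a, b) \<in> E" "last vs = f a" "hd vs = f b" by auto
      then have "?g (last vs) = a" "?g (hd vs) = b" using EV inj by (auto simp: inv_into_f_f)
      then show ?thesis using ne ab by (simp add: last_map hd_map)
    qed
    moreover have "length (map ?g vs) \<ge> 3" using c unfolding is_cycle_def by simp
    ultimately have "is_cycle (V, E) (map ?g vs)" unfolding is_cycle_wk by simp
    then show False using T unfolding is_tree_def by blast
  qed
  ultimately show ?thesis using T unfolding is_tree_def by auto
qed

lemma side_lemma:
  assumes "wk R vs" "\<forall>u v. (u, v) \<in> R \<longrightarrow> u \<in> P \<longrightarrow> v \<in> P \<or> v = r"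
    "a \<le> b" "b < length vs" "vs ! a \<in> P" "vs ! b \<notin> P"
  shows "\<exists>k. a < k \<and> k \<le> b \<and> vs ! k = r"
  using assms(3-6)
proof (induction b)
  case 0 then show ?case by simp
next
  case (Suc b)
  show ?case
  proof (cases "a \<le> b \<and> vs ! b \<notin> P")
    case True then show ?thesis using Suc by fastforce
  next
    case False
    have "a \<noteq> Suc b" using Suc by auto
    then have ab: "a \<le> b" using Suc by simp
    then have "vs ! b \<in> P" using False by simp
    moreover have "(vs ! b, vs ! Suc b) \<in> R" using assms(1) Suc unfolding wk_nth by simp
    ultimately have "vs ! Suc b = r" using assms(2) Suc by blast
    then show ?thesis using ab by (intro exI[of _ "Suc b"]) auto
  qed
qed

lemma two_sides:
  assumes w: "wk R vs" and cl: "(last vs, hd vs) \<in> R" and d: "distinct vs"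
    and cP: "\<forall>u v. (u, v) \<in> R \<longrightarrow> u \<in> P \<longrightarrow> v \<in> P \<or> v = r"
    and cQ: "\<forall>u v. (u, v) \<in> R \<longrightarrow> u \<in> Q \<longrightarrow> v \<in> Q \<or> v = r"
    and PQ: "P \<inter> Q = {}" and ij: "i < j" "j < length vs" and vi: "vs ! i \<in> P" and vj: "vs ! j \<in> Q"
  shows False
proof -
  let ?n = "length vs"
  have dist: "k = k'" if "k < ?n" "k' < ?n" "vs ! k = r" "vs ! k' = r" for k k'
    using d that nth_eq_iff_index_eq by metis
  obtain k1 where k1: "i < k1" "k1 \<le> j" "vs ! k1 = r"
    using side_lemma[OF w cP, of i j] ij vi vj PQ by auto
  show False
  proof (cases "\<exists>k. j < k \<and> k < ?n \<and> vs ! k = r")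
    case True
    then obtain k where "j < k" "k < ?n" "vs ! k = r" by blast
    then show False using dist[of k k1] k1 ij by simp
  next
    case False
    have ln: "vs ! (?n - 1) \<in> Q"
    proof (rule ccontr)
      assume "vs ! (?n - 1) \<notin> Q"
      have "\<exists>k. j < k \<and> k \<le> ?n - 1 \<and> vs ! k = r"
        by (rule side_lemma[OF w cQ]) (use ij vj \<open>vs ! (?n - 1) \<notin> Q\<close> in auto)
      then obtain k where "j < k" "k \<le> ?n - 1" "vs ! k = r" by blast
      then show False using False ij by auto
    qed
    have ne: "vs \<noteq> []" using ij by auto
    have "(vs ! (?n - 1), vs ! 0) \<in> R" using cl ne by (simp add: last_conv_nth hd_conv_nth)
    then have "vs ! 0 \<in> Q \<or> vs ! 0 = r" using cQ ln by blast
    then show False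
    proof
      assume "vs ! 0 = r"
      have "0 = k1" by (rule dist) (use k1 ij \<open>vs ! 0 = r\<close> in auto)
      then show False using k1 by simp
    next
      assume q0: "vs ! 0 \<in> Q"
      have "vs ! i \<notin> Q" using vi PQ by blast
      then obtain k where "0 < k" "k \<le> i" "vs ! k = r"
        using side_lemma[OF w cQ, of 0 i] ij q0 by auto
      then show False using dist[of k k1] k1 ij by simp
    qed
  qed
qed

lemma wk_mono': "wk R vs \<Longrightarrow> (\<forall>u v. u \<in> set vs \<longrightarrow> v \<in> set vs \<longrightarrow> (u, v) \<in> R \<longrightarrow> (u, v) \<in> R') \<Longrightarrow> wk R' vs"
  by (induction R vs rule: wk.induct) auto

lemma tree_glue:
  assumes T1: "is_tree (V1, E1)" and T2: "is_tree (V2, E2)" and I: "V1 \<inter> V2 = {r}"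
  shows "is_tree (V1 \<union> V2, E1 \<union> E2)"
proof -
  have G1: "is_graph (V1, E1)" and G2: "is_graph (V2, E2)" using T1 T2 unfolding is_tree_def by auto
  have E1V: "E1 \<subseteq> V1 \<times> V1" and E2V: "E2 \<subseteq> V2 \<times> V2" using G1 G2 unfolding is_graph_def by auto
  have irr1: "(x, x) \<notin> E1" and irr2: "(x, x) \<notin> E2" for x using G1 G2 unfolding is_graph_def by auto
  have G: "is_graph (V1 \<union> V2, E1 \<union> E2)" using G1 G2 unfolding is_graph_def by auto
  have "connected_in (V1 \<union> V2, E1 \<union> E2) V1"
    using T1 conn_mono_edges[of "(V1, E1)" V1 "(V1 \<union> V2, E1 \<union> E2)"] unfolding is_tree_def by auto
  moreover have "connected_in (V1 \<union> V2, E1 \<union> E2) V2"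
    using T2 conn_mono_edges[of "(V2, E2)" V2 "(V1 \<union> V2, E1 \<union> E2)"] unfolding is_tree_def by auto
  ultimately have C: "connected_in (V1 \<union> V2, E1 \<union> E2) (V1 \<union> V2)" using conn_union I by blast
  have nc: "\<not> is_cycle (V1 \<union> V2, E1 \<union> E2) vs" for vs
  proof
    assume c: "is_cycle (V1 \<union> V2, E1 \<union> E2) vs"
    let ?R = "E1 \<union> E2"
    have w: "wk ?R vs" and cl: "(last vs, hd vs) \<in> ?R" and d: "distinct vs"
      and sv: "set vs \<subseteq> V1 \<union> V2" and ne: "vs \<noteq> []"
      using c unfolding is_cycle_wk by auto
    have c1: "\<forall>u v. (u, v) \<in> ?R \<longrightarrow> u \<in> V1 - {r} \<longrightarrow> v \<in> V1 - {r} \<or> v = r"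
      using E1V E2V I by blast
    have c2: "\<forall>u v. (u, v) \<in> ?R \<longrightarrow> u \<in> V2 - {r} \<longrightarrow> v \<in> V2 - {r} \<or> v = r"
      using E1V E2V I by blast
    have PQ: "(V1 - {r}) \<inter> (V2 - {r}) = {}" using I by blast
    have side: "set vs \<subseteq> V1 \<or> set vs \<subseteq> V2"
    proof (rule ccontr)
      assume "\<not> (set vs \<subseteq> V1 \<or> set vs \<subseteq> V2)"
      then obtain x y where "x \<in> set vs" "x \<notin> V1" "y \<in> set vs" "y \<notin> V2" by blast
      then obtain i j where ij: "i < length vs" "vs ! i = y" "j < length vs" "vs ! j = x"
        by (meson in_set_conv_nth)
      have yP: "vs ! i \<in> V1 - {r}" using ij \<open>y \<in> set vs\<close> \<open>y \<notin> V2\<close> sv I by auto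
      have xQ: "vs ! j \<in> V2 - {r}" using ij \<open>x \<in> set vs\<close> \<open>x \<notin> V1\<close> sv I by auto
      have "i \<noteq> j" using yP xQ PQ by auto
      then show False
      proof (cases "i < j")
        case True then show False using two_sides[OF w cl d c1 c2 PQ True] ij yP xQ by blast
      next
        case False
        then have "j < i" using \<open>i \<noteq> j\<close> by simp
        moreover have "(V2 - {r}) \<inter> (V1 - {r}) = {}" using PQ by blast
        ultimately show False using two_sides[OF w cl d c2 c1] ij yP xQ by blast
      qed
    qed
    then show False
    proof
      assume s1: "set vs \<subseteq> V1"
      have "\<forall>u v. u \<in> set vs \<longrightarrow> v \<in> set vs \<longrightarrow> (u, v) \<in> ?R \<longrightarrow> (u, v) \<in> E1"
      proof (intro allI impI)
        fix u v assume uv: "u \<in> set vs" "v \<in> set vs" "(u, v) \<in> ?R"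
        show "(u, v) \<in> E1"
        proof (rule ccontr)
          assume "(u, v) \<notin> E1"
          then have e: "(u, v) \<in> E2" using uv by blast
          then have "u \<in> V2" "v \<in> V2" using E2V by auto
          moreover have "u \<in> V1" "v \<in> V1" using uv s1 by auto
          ultimately have "u = r" "v = r" using I by auto
          then show False using e irr2 by simp
        qed
      qed
      then have "wk E1 vs" "(last vs, hd vs) \<in> E1" using wk_mono'[OF w] cl ne s1 by auto
      then have "is_cycle (V1, E1) vs" using c s1 unfolding is_cycle_wk by auto
      then show False using T1 unfolding is_tree_def by blast
    next
      assume s2: "set vs \<subseteq> V2"
      have "\<forall>u v. u \<in> set vs \<longrightarrow> v \<in> set vs \<longrightarrow> (u, v) \<in> ?R \<longrightarrow> (u, v) \<in> E2"
      proof (intro allI impI)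
        fix u v assume uv: "u \<in> set vs" "v \<in> set vs" "(u, v) \<in> ?R"
        show "(u, v) \<in> E2"
        proof (rule ccontr)
          assume "(u, v) \<notin> E2"
          then have e: "(u, v) \<in> E1" using uv by blast
          then have "u \<in> V1" "v \<in> V1" using E1V by auto
          moreover have "u \<in> V2" "v \<in> V2" using uv s2 by auto
          ultimately have "u = r" "v = r" using I by auto
          then show False using e irr1 by simp
        qed
      qed
      then have "wk E2 vs" "(last vs, hd vs) \<in> E2" using wk_mono'[OF w] cl ne s2 by auto
      then have "is_cycle (V2, E2) vs" using c s2 unfolding is_cycle_wk by auto
      then show False using T2 unfolding is_tree_def by blast
    qed
  qed
  show ?thesis using G C nc I unfolding is_tree_def by auto
qed



definition tdec :: "('a \<times> 'a) set \<Rightarrow> 'a set \<Rightarrow> nat graph \<Rightarrow> (nat \<Rightarrow> 'a set) \<Rightarrow> bool" where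
  "tdec E A T B \<longleftrightarrow> is_tree T \<and> (\<forall>t\<in>verts T. B t \<subseteq> A) \<and> (\<forall>v\<in>A. \<exists>t\<in>verts T. v \<in> B t)
     \<and> (\<forall>u v. (u, v) \<in> E \<longrightarrow> u \<in> A \<longrightarrow> v \<in> A \<longrightarrow> (\<exists>t\<in>verts T. u \<in> B t \<and> v \<in> B t))
     \<and> (\<forall>v\<in>A. connected_in T {t\<in>verts T. v \<in> B t})"

lemma conn_single: "connected_in G {x}"
  unfolding connected_in_def by simp

lemma tdec_single: "tdec E A ({n}, {}) (\<lambda>_. A)"
  unfolding tdec_def using tree_single[of n] by (auto simp: conn_single)

lemma tdec_edge:
  assumes noE: "\<forall>u v. (u, v) \<in> E \<longrightarrow> u \<in> R \<union> Q \<longrightarrow> v \<in> R \<union> Q \<longrightarrow> (u \<in> R \<and> v \<in> R) \<or> (u \<in> Q \<and> v \<in> Q)"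
  shows "tdec E (R \<union> Q) ({0, 1}, {(0, 1), (1, 0)}) (\<lambda>t. if t = 0 then R else Q)"
proof -
  have T: "is_tree ({0::nat, 1}, {(0, 1), (1, 0)})" using tree_edge[of "0::nat" 1] by simp
  have C: "connected_in ({0::nat, 1}, {(0, 1), (1, 0)}) {0, 1}" using T unfolding is_tree_def by simp
  have "connected_in ({0::nat, 1}, {(0, 1), (1, 0)}) {t \<in> {0, 1}. v \<in> (if t = 0 then R else Q)}" for v
  proof -
    have "{t \<in> {0::nat, 1}. v \<in> (if t = 0 then R else Q)} \<in> {{}, {0}, {1}, {0, 1}}" by auto
    then show ?thesis using C conn_single by (auto simp: connected_in_def)
  qed
  then show ?thesis unfolding tdec_def using T noE by auto
qed

lemma tdec_merge:
  assumes D1: "tdec E A1 T1 B1" and D2: "tdec E A2 T2 B2"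
    and x1: "x1 \<in> verts T1" and x2: "x2 \<in> verts T2" and bag: "B1 x1 = B2 x2"
    and I: "A1 \<inter> A2 \<subseteq> B1 x1"
    and noE: "\<forall>u v. (u, v) \<in> E \<longrightarrow> u \<in> A1 \<union> A2 \<longrightarrow> v \<in> A1 \<union> A2 \<longrightarrow> (u \<in> A1 \<and> v \<in> A1) \<or> (u \<in> A2 \<and> v \<in> A2)"
  shows "\<exists>T B. tdec E (A1 \<union> A2) T B \<and> verts T1 \<subseteq> verts T \<and> (\<forall>t\<in>verts T1. B t = B1 t)
     \<and> (\<forall>t\<in>verts T. (\<exists>t'\<in>verts T1. B t = B1 t') \<or> (\<exists>t'\<in>verts T2. B t = B2 t'))"
proof -
  define V1 where "V1 = verts T1"
  define E1 where "E1 = edges T1"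
  define V2 where "V2 = verts T2"
  define E2 where "E2 = edges T2"
  have T1: "is_tree (V1, E1)" using D1 unfolding tdec_def V1_def E1_def by (simp add: verts_def edges_def)
  have T2: "is_tree (V2, E2)" using D2 unfolding tdec_def V2_def E2_def by (simp add: verts_def edges_def)
  have fin1: "finite V1" using T1 unfolding is_tree_def is_graph_def by simp
  define N where "N = Suc (Max V1)"
  have ltN: "t < N" if "t \<in> V1" for t using that fin1 unfolding N_def by (simp add: le_imp_less_Suc)
  define f where "f n = (if n = x2 then x1 else n + N)" for n
  have inj: "inj_on f V2"
  proof (rule inj_onI)
    fix a b assume "a \<in> V2" "b \<in> V2" "f a = f b"
    then show "a = b" using ltN[of x1] x1 unfolding f_def V1_def by (auto split: if_splits)
  qed
  define V2' where "V2' = f ` V2"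
  define E2' where "E2' = map_prod f f ` E2"
  have T2': "is_tree (V2', E2')" unfolding V2'_def E2'_def by (rule tree_rename[OF T2 inj])
  have fx2: "f x2 = x1" unfolding f_def by simp
  have VI: "V1 \<inter> V2' = {x1}"
  proof
    show "V1 \<inter> V2' \<subseteq> {x1}"
    proof
      fix t assume "t \<in> V1 \<inter> V2'"
      then obtain m where "m \<in> V2" "t = f m" "t \<in> V1" unfolding V2'_def by auto
      then show "t \<in> {x1}" using ltN[of t] unfolding f_def by (auto split: if_splits)
    qed
    show "{x1} \<subseteq> V1 \<inter> V2'" using x1 x2 fx2 unfolding V1_def V2_def V2'_def by force
  qed
  define T where "T = (V1 \<union> V2', E1 \<union> E2')"
  have T: "is_tree T" unfolding T_def by (rule tree_glue[OF T1 T2' VI])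
  define B where "B n = (if n \<in> V1 then B1 n else B2 (n - N))" for n
  have BV1: "B t = B1 t" if "t \<in> V1" for t using that unfolding B_def by simp
  have Bf: "B (f m) = B2 m" if "m \<in> V2" for m
  proof (cases "m = x2")
    case True then show ?thesis using bag x1 unfolding B_def f_def V1_def by simp
  next
    case False
    have "m + N \<notin> V1" using ltN by force
    then show ?thesis using False unfolding B_def f_def by simp
  qed
  have bag1: "B1 t \<subseteq> A1" if "t \<in> V1" for t using D1 that unfolding tdec_def V1_def by blast
  have bag2: "B2 t \<subseteq> A2" if "t \<in> V2" for t using D2 that unfolding tdec_def V2_def by blast
  have vT: "verts T = V1 \<union> V2'" unfolding T_def by simp
  have "tdec E (A1 \<union> A2) T B"
    unfolding tdec_def
  proof (intro conjI ballI allI impI)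
    show "is_tree T" by (rule T)
  next
    fix t assume "t \<in> verts T"
    then have "t \<in> V1 \<or> (\<exists>m\<in>V2. t = f m)" unfolding vT V2'_def by auto
    then show "B t \<subseteq> A1 \<union> A2"
    proof
      assume "t \<in> V1" then show ?thesis using bag1[of t] BV1[of t] by auto
    next
      assume "\<exists>m\<in>V2. t = f m"
      then obtain m where "m \<in> V2" "t = f m" by blast
      then show ?thesis using bag2[of m] Bf[of m] by auto
    qed
  next
    fix v assume "v \<in> A1 \<union> A2"
    then show "\<exists>t\<in>verts T. v \<in> B t"
    proof
      assume "v \<in> A1"
      then obtain t where "t \<in> V1" "v \<in> B1 t" using D1 unfolding tdec_def V1_def by blast
      then show ?thesis using BV1 unfolding vT by auto
    next
      assume "v \<in> A2"
      then obtain t where "t \<in> V2" "v \<in> B2 t" using D2 unfolding tdec_def V2_def by blast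
      then show ?thesis using Bf unfolding vT V2'_def by (intro bexI[of _ "f t"]) auto
    qed
  next
    fix u v assume uv: "(u, v) \<in> E" "u \<in> A1 \<union> A2" "v \<in> A1 \<union> A2"
    then have "(u \<in> A1 \<and> v \<in> A1) \<or> (u \<in> A2 \<and> v \<in> A2)" using noE by blast
    then show "\<exists>t\<in>verts T. u \<in> B t \<and> v \<in> B t"
    proof
      assume "u \<in> A1 \<and> v \<in> A1"
      then obtain t where "t \<in> V1" "u \<in> B1 t" "v \<in> B1 t" using D1 uv(1) unfolding tdec_def V1_def by blast
      then show ?thesis using BV1 unfolding vT by auto
    next
      assume "u \<in> A2 \<and> v \<in> A2"
      then obtain t where "t \<in> V2" "u \<in> B2 t" "v \<in> B2 t" using D2 uv(1) unfolding tdec_def V2_def by blast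
      then show ?thesis using Bf unfolding vT V2'_def by (intro bexI[of _ "f t"]) auto
    qed
  next
    fix v assume vA: "v \<in> A1 \<union> A2"
    define S1 where "S1 = {t \<in> V1. v \<in> B1 t}"
    define S2 where "S2 = {t \<in> V2. v \<in> B2 t}"
    have Seq: "{t \<in> verts T. v \<in> B t} = S1 \<union> f ` S2"
    proof
      show "{t \<in> verts T. v \<in> B t} \<subseteq> S1 \<union> f ` S2"
      proof
        fix t assume "t \<in> {t \<in> verts T. v \<in> B t}"
        then have "t \<in> V1 \<union> V2'" "v \<in> B t" unfolding vT by auto
        then show "t \<in> S1 \<union> f ` S2" unfolding S1_def S2_def V2'_def using BV1 Bf by (cases "t \<in> V1") auto
      qed
      show "S1 \<union> f ` S2 \<subseteq> {t \<in> verts T. v \<in> B t}"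
        unfolding S1_def S2_def vT V2'_def using BV1 Bf by auto
    qed
    have C1: "connected_in T S1" if "v \<in> A1"
    proof -
      have "connected_in T1 S1" using D1 that unfolding tdec_def S1_def V1_def by blast
      then show ?thesis by (rule conn_mono_edges) (simp add: T_def E1_def)
    qed
    have C2: "connected_in T (f ` S2)" if "v \<in> A2"
    proof -
      have "connected_in T2 S2" using D2 that unfolding tdec_def S2_def V2_def by blast
      then have "connected_in (V2, E2) S2" unfolding V2_def E2_def by (simp add: verts_def edges_def connected_in_def)
      then have "connected_in (V2', E2') (f ` S2)" unfolding E2'_def by (rule conn_image)
      then show ?thesis by (rule conn_mono_edges) (simp add: T_def)
    qed
    have S1e: "S1 = {}" if "v \<notin> A1" using bag1 that unfolding S1_def by blast
    have S2e: "S2 = {}" if "v \<notin> A2" using bag2 that unfolding S2_def by blast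
    show "connected_in T {t \<in> verts T. v \<in> B t}"
      unfolding Seq
    proof (cases "v \<in> A1 \<and> v \<in> A2")
      case True
      then have "v \<in> B1 x1" using I by blast
      then have "x1 \<in> S1" "x2 \<in> S2" using x1 x2 bag unfolding S1_def S2_def V1_def V2_def by auto
      then have "S1 \<inter> f ` S2 \<noteq> {}" using fx2 by force
      then show "connected_in T (S1 \<union> f ` S2)" using conn_union C1 C2 True by blast
    next
      case False
      then show "connected_in T (S1 \<union> f ` S2)" using vA C1 C2 S1e S2e by auto
    qed
  qed
  moreover have "verts T1 \<subseteq> verts T" unfolding vT V1_def by auto
  moreover have "\<forall>t\<in>verts T1. B t = B1 t" using BV1 unfolding V1_def by simp
  moreover have "\<forall>t\<in>verts T. (\<exists>t'\<in>verts T1. B t = B1 t') \<or> (\<exists>t'\<in>verts T2. B t = B2 t')"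
    using BV1 Bf unfolding vT V2'_def V1_def V2_def by auto
  ultimately show ?thesis by blast
qed



definition cmp :: "('a \<times> 'a) set \<Rightarrow> 'a set \<Rightarrow> 'a \<Rightarrow> 'a set" where
  "cmp E S v = {y\<in>S. (v, y) \<in> (E \<inter> S \<times> S)\<^sup>*}"

lemma cmp_self: "v \<in> S \<Longrightarrow> v \<in> cmp E S v" unfolding cmp_def by simp
lemma cmp_sub: "cmp E S v \<subseteq> S" unfolding cmp_def by auto

lemma cmp_eq: assumes "sym E" "w \<in> cmp E S v" shows "cmp E S w = cmp E S v"
proof -
  have vw: "(v, w) \<in> (E \<inter> S \<times> S)\<^sup>*" using assms(2) unfolding cmp_def by simp
  then have wv: "(w, v) \<in> (E \<inter> S \<times> S)\<^sup>*" using rt_sym assms(1) by fast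
  show ?thesis unfolding cmp_def using vw wv by (auto intro: rtrancl_trans)
qed

lemma cmp_disj: "sym E \<Longrightarrow> x \<in> cmp E S v1 \<Longrightarrow> x \<in> cmp E S v2 \<Longrightarrow> cmp E S v1 = cmp E S v2"
  using cmp_eq by metis

lemma cmp_closed: "x \<in> cmp E S v \<Longrightarrow> y \<in> S \<Longrightarrow> (x, y) \<in> E \<Longrightarrow> y \<in> cmp E S v"
  unfolding cmp_def by (auto intro: rtrancl_into_rtrancl)

lemma cmp_conn: "sym (edges G) \<Longrightarrow> v \<in> S \<Longrightarrow> connected_in G (cmp (edges G) S v)"
  unfolding cmp_def by (rule reach_conn)

definition SepP :: "'a graph \<Rightarrow> nat \<Rightarrow> bool" where
  "SepP G s \<longleftrightarrow> (\<forall>W. W \<subseteq> verts G \<longrightarrow> (\<exists>X. X \<subseteq> verts G \<and> card X \<le> s \<and>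
      (\<forall>K. K \<subseteq> verts G - X \<longrightarrow> connected_in G K \<longrightarrow> 2 * card (K \<inter> W) \<le> card W)))"

lemma rec_main:
  assumes G: "is_graph G" and sep: "SepP G s"
  shows "A \<subseteq> verts G \<Longrightarrow> U \<subseteq> A \<Longrightarrow> card U \<le> 3 * s + 1
    \<Longrightarrow> (\<forall>x y. (x, y) \<in> edges G \<longrightarrow> x \<in> A - U \<longrightarrow> y \<in> A)
    \<Longrightarrow> \<exists>T B. tdec (edges G) A T B \<and> (\<forall>t\<in>verts T. card (B t) \<le> 4 * s + 1) \<and> (\<exists>t\<in>verts T. U \<subseteq> B t)"
proof (induction "card A * (3 * s + 2) + (3 * s + 1 - card U)" arbitrary: A U rule: less_induct)
  case less
  let ?E = "edges G"
  have finV: "finite (verts G)" using G unfolding is_graph_def by simp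
  have finA: "finite A" using less.prems(1) finV finite_subset by blast
  have symE: "sym ?E" using G by (rule graph_sym)
  show ?case
  proof (cases "card A \<le> 4 * s + 1")
    case True
    have "tdec ?E A ({0}, {}) (\<lambda>_. A)" by (rule tdec_single)
    then show ?thesis using True less.prems(2) by (intro exI[of _ "({0}, {})"] exI[of _ "\<lambda>_. A"]) auto
  next
    case big: False
    show ?thesis
    proof (cases "card U < 3 * s + 1")
      case True
      have "card U < card A" using True big by simp
      have finU: "finite U" using less.prems(2) finA finite_subset by blast
      have "\<not> A \<subseteq> U"
      proof
        assume "A \<subseteq> U"
        then have "card A \<le> card U" using card_mono[OF finU] by blast
        then show False using \<open>card U < card A\<close> by simp
      qed
      then obtain v where v: "v \<in> A" "v \<notin> U" by blast
      let ?U = "insert v U"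
      have cU: "card ?U = Suc (card U)" using v finU by simp
      have "card A * (3 * s + 2) + (3 * s + 1 - card ?U) < card A * (3 * s + 2) + (3 * s + 1 - card U)"
        using cU True by simp
      moreover have "?U \<subseteq> A" using v less.prems(2) by simp
      moreover have "card ?U \<le> 3 * s + 1" using cU True by simp
      moreover have "\<forall>x y. (x, y) \<in> ?E \<longrightarrow> x \<in> A - ?U \<longrightarrow> y \<in> A" using less.prems(4) by blast
      ultimately obtain T B where "tdec ?E A T B" "\<forall>t\<in>verts T. card (B t) \<le> 4 * s + 1" "\<exists>t\<in>verts T. ?U \<subseteq> B t"
        using less.hyps[of A ?U] less.prems(1) by blast
      then show ?thesis by blast
    next
      case False
      then have cU: "card U = 3 * s + 1" using less.prems(3) by simp
      have UV: "U \<subseteq> verts G" using less.prems(1,2) by blast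
      have "\<exists>X. X \<subseteq> verts G \<and> card X \<le> s \<and>
        (\<forall>K. K \<subseteq> verts G - X \<longrightarrow> connected_in G K \<longrightarrow> 2 * card (K \<inter> U) \<le> card U)"
        using sep[unfolded SepP_def, rule_format, OF UV] .
      then obtain X where X: "X \<subseteq> verts G" "card X \<le> s"
        "\<forall>K. K \<subseteq> verts G - X \<longrightarrow> connected_in G K \<longrightarrow> 2 * card (K \<inter> U) \<le> card U"
        by blast
      define X' where "X' = X \<inter> A"
      have finX: "finite X" using X(1) finV finite_subset by blast
      have cX': "card X' \<le> s" using X(2) card_mono[OF finX] unfolding X'_def by (meson inf_le1 le_trans)
      define S where "S = A - X'"
      define R where "R = U \<union> X'"
      define AC where "AC C = C \<union> X'" for C
      define UC where "UC C = (U \<inter> C) \<union> X'" for C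
      define CC where "CC = cmp ?E S ` S"
      have finCC: "finite CC" unfolding CC_def S_def using finA by simp
      have RA: "R \<subseteq> A" unfolding R_def X'_def using less.prems(2) by blast
      have finR: "finite R" using RA finA finite_subset by blast
      have cR: "card R \<le> 4 * s + 1" unfolding R_def using card_Un_le[of U X'] cU cX' by simp
      have CCe: "\<exists>v\<in>S. C = cmp ?E S v" if "C \<in> CC" for C using that unfolding CC_def by (simp add: image_iff)
      have CS: "C \<subseteq> S" if hC: "C \<in> CC" for C
      proof -
        obtain v where "C = cmp ?E S v" using CCe[OF hC] by blast
        then show ?thesis using cmp_sub[of ?E S v] by simp
      qed
      have Cconn: "connected_in G C" if hC: "C \<in> CC" for C
      proof -
        obtain v where "v \<in> S" "C = cmp ?E S v" using CCe[OF hC] by blast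
        then show ?thesis using cmp_conn[OF symE, of v S] by simp
      qed
      have Cdisj: "C1 = C2" if h: "C1 \<in> CC" "C2 \<in> CC" "x \<in> C1" "x \<in> C2" for C1 C2 x
      proof -
        obtain v1 where "C1 = cmp ?E S v1" using CCe[OF h(1)] by blast
        moreover obtain v2 where "C2 = cmp ?E S v2" using CCe[OF h(2)] by blast
        ultimately show ?thesis using cmp_disj[OF symE, of x S v1 v2] h(3,4) by simp
      qed
      have Cclosed: "y \<in> C" if h: "C \<in> CC" "x \<in> C" "x \<notin> U" "(x, y) \<in> ?E" "y \<notin> X'" for C x y
      proof -
        have "x \<in> A - U" using that CS unfolding S_def by blast
        then have "y \<in> A" using less.prems(4) that(4) by blast
        then have "y \<in> S" using that(5) unfolding S_def by blast
        obtain v where "C = cmp ?E S v" using CCe[OF h(1)] by blast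
        then show ?thesis using cmp_closed[of x ?E S v y] h(2,4) \<open>y \<in> S\<close> by simp
      qed
      have CU: "2 * card (U \<inter> C) \<le> 3 * s + 1" if "C \<in> CC" for C
      proof -
        have "C \<subseteq> verts G - X" using CS[OF that] less.prems(1) unfolding S_def X'_def by blast
        then have "2 * card (C \<inter> U) \<le> card U" using X(3) Cconn[OF that] by blast
        then show ?thesis using cU by (simp add: Int_commute)
      qed
      have finC: "finite C" if "C \<in> CC" for C using CS[OF that] finA finite_subset unfolding S_def by blast
      have child: "\<exists>T B r. tdec ?E (R \<union> AC C) T B \<and> r \<in> verts T \<and> B r = R \<and> (\<forall>t\<in>verts T. card (B t) \<le> 4 * s + 1)"
        if CC: "C \<in> CC" for C
      proof -
        have finUC: "finite (U \<inter> C)" using finC[OF CC] by simp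
        have finX': "finite X'" using finX unfolding X'_def by simp
        have cUC: "card (UC C) \<le> card (U \<inter> C) + s"
          unfolding UC_def using card_Un_le[of "U \<inter> C" X'] cX' by simp
        have "card (U \<inter> (C \<union> X')) \<le> card (U \<inter> C) + card X'"
        proof -
          have "U \<inter> (C \<union> X') = (U \<inter> C) \<union> (U \<inter> X')" by blast
          then have "card (U \<inter> (C \<union> X')) \<le> card (U \<inter> C) + card (U \<inter> X')" using card_Un_le by metis
          moreover have "card (U \<inter> X') \<le> card X'" using card_mono[OF finX'] by blast
          ultimately show ?thesis by linarith
        qed
        then have "card (U \<inter> (C \<union> X')) < card U" using CU[OF CC] cX' cU by linarith
        then have "\<not> U \<subseteq> C \<union> X'"
        proof (intro notI)
          assume "U \<subseteq> C \<union> X'"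
          then have "U \<inter> (C \<union> X') = U" by blast
          then show False using \<open>card (U \<inter> (C \<union> X')) < card U\<close> by simp
        qed
        then obtain u where u: "u \<in> U" "u \<notin> AC C" unfolding AC_def by blast
        have ACA: "AC C \<subseteq> A" unfolding AC_def X'_def using CS[OF CC] unfolding S_def by blast
        have "AC C \<subset> A" using ACA u less.prems(2) by blast
        then have cAC: "card (AC C) < card A" by (rule psubset_card_mono[OF finA])
        have m: "card (AC C) * (3 * s + 2) + (3 * s + 1 - card (UC C)) < card A * (3 * s + 2) + (3 * s + 1 - card U)"
        proof -
          have "card (AC C) * (3 * s + 2) + (3 * s + 1 - card (UC C)) < (card (AC C) + 1) * (3 * s + 2)" by simp
          also have "\<dots> \<le> card A * (3 * s + 2)" using cAC by (intro mult_right_mono) auto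
          finally show ?thesis by simp
        qed
        have p1: "AC C \<subseteq> verts G" using ACA less.prems(1) by blast
        have p2: "UC C \<subseteq> AC C" unfolding UC_def AC_def by blast
        have p3: "card (UC C) \<le> 3 * s + 1" using cUC CU[OF CC] by linarith
        have p4: "\<forall>x y. (x, y) \<in> ?E \<longrightarrow> x \<in> AC C - UC C \<longrightarrow> y \<in> AC C"
        proof (intro allI impI)
          fix x y assume e: "(x, y) \<in> ?E" and x: "x \<in> AC C - UC C"
          then have "x \<in> C" "x \<notin> U" unfolding AC_def UC_def by auto
          then show "y \<in> AC C" using Cclosed[OF CC _ _ e] unfolding AC_def by blast
        qed
        obtain T1 B1 where D1: "tdec ?E (AC C) T1 B1" "\<forall>t\<in>verts T1. card (B1 t) \<le> 4 * s + 1"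
          and c: "\<exists>t\<in>verts T1. UC C \<subseteq> B1 t"
          using less.hyps[OF m p1 p2 p3 p4] by blast
        obtain c where c: "c \<in> verts T1" "UC C \<subseteq> B1 c" using c by blast
        have Bc: "B1 c \<subseteq> AC C" using D1(1) c(1) unfolding tdec_def by blast
        have sep1: "False" if "(p, q) \<in> ?E \<or> (q, p) \<in> ?E" "p \<in> R" "p \<notin> AC C" "q \<in> C" "q \<notin> U" for p q
        proof -
          have qp: "(q, p) \<in> ?E" using that(1) symE by (auto dest: symD)
          have "p \<notin> X'" using that(3) unfolding AC_def by blast
          then have "p \<in> C" using Cclosed[OF CC that(4) that(5) qp] by blast
          then show False using that(3) unfolding AC_def by blast
        qed
        define T0 where "T0 = ({0::nat, 1}, {(0::nat, 1::nat), (1, 0)})"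
        define B0 where "B0 = (\<lambda>t::nat. if t = 0 then R else B1 c)"
        have D0: "tdec ?E (R \<union> B1 c) T0 B0"
          unfolding T0_def B0_def
        proof (rule tdec_edge, intro allI impI)
          fix u v assume uv: "(u, v) \<in> ?E" "u \<in> R \<union> B1 c" "v \<in> R \<union> B1 c"
          show "u \<in> R \<and> v \<in> R \<or> u \<in> B1 c \<and> v \<in> B1 c"
          proof (rule ccontr)
            assume nn: "\<not> (u \<in> R \<and> v \<in> R \<or> u \<in> B1 c \<and> v \<in> B1 c)"
            have bc: "z \<in> C \<and> z \<notin> U" if "z \<in> B1 c" "z \<notin> R" for z
              using that Bc unfolding AC_def R_def by blast
            have ra: "z \<notin> AC C" if "z \<in> R" "z \<notin> B1 c" for z
              using that c(2) unfolding AC_def UC_def R_def by blast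
            show False
            proof (cases "u \<in> R")
              case True
              then have "u \<notin> B1 c" "v \<in> B1 c" "v \<notin> R" using nn uv by auto
              then show False using sep1[of u v] uv(1) True bc ra by blast
            next
              case False
              then have "u \<in> B1 c" "v \<in> R" "v \<notin> B1 c" using nn uv by auto
              then show False using sep1[of v u] uv(1) False bc ra by blast
            qed
          qed
        qed
        have "\<exists>T B. tdec ?E ((R \<union> B1 c) \<union> AC C) T B \<and> verts T0 \<subseteq> verts T \<and> (\<forall>t\<in>verts T0. B t = B0 t)
           \<and> (\<forall>t\<in>verts T. (\<exists>t'\<in>verts T0. B t = B0 t') \<or> (\<exists>t'\<in>verts T1. B t = B1 t'))"
        proof (rule tdec_merge[OF D0 D1(1)])
          show "1 \<in> verts T0" unfolding T0_def by simp
          show "c \<in> verts T1" by (rule c(1))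
          show "B0 1 = B1 c" unfolding B0_def by simp
          show "(R \<union> B1 c) \<inter> AC C \<subseteq> B0 1"
            using c(2) unfolding B0_def R_def AC_def UC_def by auto
          show "\<forall>u v. (u, v) \<in> ?E \<longrightarrow> u \<in> R \<union> B1 c \<union> AC C \<longrightarrow> v \<in> R \<union> B1 c \<union> AC C \<longrightarrow>
              u \<in> R \<union> B1 c \<and> v \<in> R \<union> B1 c \<or> u \<in> AC C \<and> v \<in> AC C"
          proof (intro allI impI)
            fix u v assume uv: "(u, v) \<in> ?E" "u \<in> R \<union> B1 c \<union> AC C" "v \<in> R \<union> B1 c \<union> AC C"
            show "u \<in> R \<union> B1 c \<and> v \<in> R \<union> B1 c \<or> u \<in> AC C \<and> v \<in> AC C"
            proof (rule ccontr)
              assume nn: "\<not> ?thesis"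
              have a: "z \<in> R \<and> z \<notin> AC C" if "z \<in> R \<union> B1 c \<union> AC C" "z \<notin> AC C" for z
                using that Bc by blast
              have b: "z \<in> C \<and> z \<notin> U" if "z \<in> R \<union> B1 c \<union> AC C" "z \<notin> R \<union> B1 c" for z
                using that unfolding AC_def R_def by blast
              show False
              proof (cases "u \<in> AC C")
                case True
                then have "v \<notin> AC C" "u \<notin> R \<union> B1 c" using nn uv Bc by auto
                then show False using sep1[of v u] uv a b by blast
              next
                case False
                then have "v \<notin> R \<union> B1 c" using nn uv Bc by auto
                then show False using sep1[of u v] uv a b False by blast
              qed
            qed
          qed
        qed
        then obtain T B where M: "tdec ?E ((R \<union> B1 c) \<union> AC C) T B" "verts T0 \<subseteq> verts T"
          "\<forall>t\<in>verts T0. B t = B0 t"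
          "\<forall>t\<in>verts T. (\<exists>t'\<in>verts T0. B t = B0 t') \<or> (\<exists>t'\<in>verts T1. B t = B1 t')" by blast
        have eqA: "(R \<union> B1 c) \<union> AC C = R \<union> AC C" using Bc by blast
        have "0 \<in> verts T" using M(2) unfolding T0_def by auto
        moreover have "B 0 = R" using M(3) unfolding T0_def B0_def by simp
        moreover have "\<forall>t\<in>verts T. card (B t) \<le> 4 * s + 1"
        proof
          fix t assume "t \<in> verts T"
          then consider (a) t' where "t' \<in> verts T0" "B t = B0 t'" | (b) t' where "t' \<in> verts T1" "B t = B1 t'"
            using M(4) by blast
          then show "card (B t) \<le> 4 * s + 1"
          proof cases
            case a then show ?thesis using cR D1(2) c(1) unfolding B0_def by (auto split: if_splits)
          next
            case b then show ?thesis using D1(2) by simp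
          qed
        qed
        ultimately show ?thesis using M(1) eqA by (intro exI[of _ T] exI[of _ B] exI[of _ 0]) simp
      qed
      have fold: "\<exists>T B r. tdec ?E (R \<union> \<Union>(AC ` CC')) T B \<and> r \<in> verts T \<and> B r = R \<and> (\<forall>t\<in>verts T. card (B t) \<le> 4 * s + 1)"
        if "CC' \<subseteq> CC" for CC'
      proof -
        have "finite CC'" using that finCC finite_subset by blast
        then show ?thesis using that
        proof (induction CC' rule: finite_induct)
          case empty
          have "tdec ?E R ({0}, {}) (\<lambda>_. R)" by (rule tdec_single)
          then show ?case using cR by (intro exI[of _ "({0}, {})"] exI[of _ "\<lambda>_. R"] exI[of _ 0]) auto
        next
          case (insert C0 CC')
          then obtain T1 B1 r1 where D1: "tdec ?E (R \<union> \<Union>(AC ` CC')) T1 B1" "r1 \<in> verts T1" "B1 r1 = R"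
            "\<forall>t\<in>verts T1. card (B1 t) \<le> 4 * s + 1" by blast
          have C0: "C0 \<in> CC" using insert by blast
          obtain T2 B2 r2 where D2: "tdec ?E (R \<union> AC C0) T2 B2" "r2 \<in> verts T2" "B2 r2 = R"
            "\<forall>t\<in>verts T2. card (B2 t) \<le> 4 * s + 1" using child[OF C0] by blast
          have inC: "\<exists>C\<in>CC'. z \<in> C" if "z \<in> R \<union> \<Union>(AC ` CC')" "z \<notin> R" for z
            using that unfolding AC_def R_def by blast
          have inC0: "z \<in> C0" if "z \<in> R \<union> AC C0" "z \<notin> R" for z
            using that unfolding AC_def R_def by blast
          have "\<exists>T B. tdec ?E ((R \<union> \<Union>(AC ` CC')) \<union> (R \<union> AC C0)) T B \<and> verts T1 \<subseteq> verts T \<and> (\<forall>t\<in>verts T1. B t = B1 t)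
           \<and> (\<forall>t\<in>verts T. (\<exists>t'\<in>verts T1. B t = B1 t') \<or> (\<exists>t'\<in>verts T2. B t = B2 t'))"
          proof (rule tdec_merge[OF D1(1) D2(1) D1(2) D2(2)])
            show "B1 r1 = B2 r2" using D1(3) D2(3) by simp
            show "(R \<union> \<Union>(AC ` CC')) \<inter> (R \<union> AC C0) \<subseteq> B1 r1"
            proof
              fix z assume z: "z \<in> (R \<union> \<Union>(AC ` CC')) \<inter> (R \<union> AC C0)"
              show "z \<in> B1 r1"
              proof (rule ccontr)
                assume "z \<notin> B1 r1"
                then have "z \<notin> R" using D1(3) by simp
                then obtain C where "C \<in> CC'" "z \<in> C" "z \<in> C0" using inC inC0 z by blast
                then have "C = C0" using Cdisj[of C C0 z] insert.prems C0 by blast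
                then show False using \<open>C \<in> CC'\<close> insert.hyps(2) by simp
              qed
            qed
            show "\<forall>u v. (u, v) \<in> ?E \<longrightarrow> u \<in> (R \<union> \<Union>(AC ` CC')) \<union> (R \<union> AC C0) \<longrightarrow> v \<in> (R \<union> \<Union>(AC ` CC')) \<union> (R \<union> AC C0) \<longrightarrow>
              u \<in> R \<union> \<Union>(AC ` CC') \<and> v \<in> R \<union> \<Union>(AC ` CC') \<or> u \<in> R \<union> AC C0 \<and> v \<in> R \<union> AC C0"
            proof (intro allI impI)
              fix u v assume uv: "(u, v) \<in> ?E" "u \<in> (R \<union> \<Union>(AC ` CC')) \<union> (R \<union> AC C0)"
                "v \<in> (R \<union> \<Union>(AC ` CC')) \<union> (R \<union> AC C0)"
              have vu: "(v, u) \<in> ?E" using uv(1) symE by (auto dest: symD)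
              have key: "False" if h: "(p, q) \<in> ?E" "p \<in> R \<union> \<Union>(AC ` CC')" "p \<notin> R \<union> AC C0"
                 "q \<in> R \<union> AC C0" "q \<notin> R \<union> \<Union>(AC ` CC')" for p q
              proof -
                obtain C where C: "C \<in> CC'" "p \<in> C" using inC h(2,3) by blast
                have "p \<notin> U" using h(3) unfolding R_def by blast
                moreover have "q \<notin> X'" using h(5) unfolding R_def by blast
                ultimately have "q \<in> C" using Cclosed[of C p q] C insert.prems h(1) by blast
                then show False using h(5) C unfolding AC_def by blast
              qed
              show "u \<in> R \<union> \<Union>(AC ` CC') \<and> v \<in> R \<union> \<Union>(AC ` CC') \<or> u \<in> R \<union> AC C0 \<and> v \<in> R \<union> AC C0"
                using key[of u v] key[of v u] uv vu by blast
            qed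
          qed
          then obtain T B where M: "tdec ?E ((R \<union> \<Union>(AC ` CC')) \<union> (R \<union> AC C0)) T B" "verts T1 \<subseteq> verts T"
            "\<forall>t\<in>verts T1. B t = B1 t"
            "\<forall>t\<in>verts T. (\<exists>t'\<in>verts T1. B t = B1 t') \<or> (\<exists>t'\<in>verts T2. B t = B2 t')" by blast
          have eq: "(R \<union> \<Union>(AC ` CC')) \<union> (R \<union> AC C0) = R \<union> \<Union>(AC ` insert C0 CC')" by auto
          have "\<forall>t\<in>verts T. card (B t) \<le> 4 * s + 1" using M(4) D1(4) D2(4) by fastforce
          then show ?case using M(1,2,3) eq D1(2,3) by (intro exI[of _ T] exI[of _ B] exI[of _ r1]) auto
        qed
      qed
      obtain T B r where F: "tdec ?E (R \<union> \<Union>(AC ` CC)) T B" "r \<in> verts T" "B r = R"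
        "\<forall>t\<in>verts T. card (B t) \<le> 4 * s + 1" using fold[of CC] by blast
      have "R \<union> \<Union>(AC ` CC) = A"
      proof
        show "R \<union> \<Union>(AC ` CC) \<subseteq> A" using RA CS unfolding AC_def S_def X'_def by blast
        show "A \<subseteq> R \<union> \<Union>(AC ` CC)"
        proof
          fix a assume "a \<in> A"
          show "a \<in> R \<union> \<Union>(AC ` CC)"
          proof (cases "a \<in> X'")
            case True then show ?thesis unfolding R_def by blast
          next
            case False
            then have "a \<in> S" using \<open>a \<in> A\<close> unfolding S_def by blast
            then have "cmp ?E S a \<in> CC" "a \<in> cmp ?E S a" unfolding CC_def by (auto intro: cmp_self)
            then show ?thesis unfolding AC_def by blast
          qed
        qed
      qed
      then show ?thesis using F unfolding R_def by blast
    qed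
  qed
qed



lemma N_conn:
  assumes TD: "tree_decomposition H T B" and KV: "K \<subseteq> verts H" and KC: "connected_in H K"
  shows "connected_in T {u\<in>verts T. B u \<inter> K \<noteq> {}}"
  unfolding connected_in_def
proof (intro ballI)
  let ?N = "{u\<in>verts T. B u \<inter> K \<noteq> {}}"
  let ?R = "edges T \<inter> ?N \<times> ?N"
  have sub: "(u, u') \<in> ?R\<^sup>*" if "x \<in> K" "u \<in> verts T" "u' \<in> verts T" "x \<in> B u" "x \<in> B u'" for x u u'
  proof -
    have "connected_in T {t\<in>verts T. x \<in> B t}" using TD that(1) KV unfolding tree_decomposition_def by blast
    then have "(u, u') \<in> (edges T \<inter> {t\<in>verts T. x \<in> B t} \<times> {t\<in>verts T. x \<in> B t})\<^sup>*"
      using that unfolding connected_in_def by blast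
    then show ?thesis by (rule rt_mono) (use that(1) in auto)
  qed
  fix u1 u2 assume u1: "u1 \<in> ?N" and u2: "u2 \<in> ?N"
  obtain x1 where x1: "x1 \<in> B u1" "x1 \<in> K" using u1 by blast
  obtain x2 where x2: "x2 \<in> B u2" "x2 \<in> K" using u2 by blast
  have "(x1, x2) \<in> (edges H \<inter> K \<times> K)\<^sup>*" using KC x1 x2 unfolding connected_in_def by blast
  then have "\<forall>u\<in>verts T. x2 \<in> B u \<longrightarrow> (u1, u) \<in> ?R\<^sup>*"
  proof (induction rule: rtrancl_induct)
    case base
    then show ?case using sub[of x1 u1] x1 u1 by blast
  next
    case (step x z)
    then have e: "(x, z) \<in> edges H" "x \<in> K" "z \<in> K" by auto
    then obtain u'' where u'': "u'' \<in> verts T" "x \<in> B u''" "z \<in> B u''"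
      using TD unfolding tree_decomposition_def by blast
    have "(u1, u'') \<in> ?R\<^sup>*" using step.IH u'' by blast
    then show ?case using sub[of z u''] u'' e by (meson rtrancl_trans)
  qed
  then show "(u1, u2) \<in> ?R\<^sup>*" using u2 x2 by blast
qed

lemma sep_H:
  assumes TD: "tree_decomposition H T B" and GH: "is_graph H" and finW: "finite W"
  shows "\<exists>t\<in>verts T. \<forall>K. K \<subseteq> verts H - B t \<longrightarrow> connected_in H K \<longrightarrow> 2 * card (K \<inter> W) \<le> card W"
proof (rule ccontr)
  assume "\<not> ?thesis"
  then have "\<forall>t\<in>verts T. \<exists>K. K \<subseteq> verts H - B t \<and> connected_in H K \<and> card W < 2 * card (K \<inter> W)"
    by (auto simp: not_le)
  then obtain Kf where Kf: "\<And>t. t \<in> verts T \<Longrightarrow> Kf t \<subseteq> verts H - B t \<and> connected_in H (Kf t) \<and> card W < 2 * card (Kf t \<inter> W)"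
    by metis
  let ?V = "verts T" and ?E = "edges T"
  have tree: "is_tree T" using TD unfolding tree_decomposition_def by blast
  have GT: "is_graph T" using tree unfolding is_tree_def by blast
  have symT: "sym ?E" using GT by (rule graph_sym)
  have connT: "connected_in T ?V" using tree unfolding is_tree_def by blast
  define N where "N t = {u\<in>?V. B u \<inter> Kf t \<noteq> {}}" for t
  have Nconn: "connected_in T (N t)" if "t \<in> ?V" for t
    unfolding N_def using N_conn[OF TD] Kf[OF that] by blast
  have Nt: "t \<notin> N t" if "t \<in> ?V" for t using Kf[OF that] unfolding N_def by blast
  have Nne: "N t \<noteq> {}" if tV: "t \<in> ?V" for t
  proof -
    have "Kf t \<inter> W \<noteq> {}" using Kf[OF tV] by (metis card.empty mult_0_right not_less0)
    then obtain x where "x \<in> Kf t" by blast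
    then have "x \<in> verts H" using Kf[OF tV] by blast
    then obtain u where "u \<in> ?V" "x \<in> B u" using TD unfolding tree_decomposition_def by blast
    then show ?thesis unfolding N_def using \<open>x \<in> Kf t\<close> by blast
  qed
  have meet: "\<exists>x. x \<in> Kf t1 \<and> x \<in> Kf t2" if "t1 \<in> ?V" "t2 \<in> ?V" for t1 t2
  proof (rule ccontr)
    assume "\<nexists>x. x \<in> Kf t1 \<and> x \<in> Kf t2"
    then have "(Kf t1 \<inter> W) \<inter> (Kf t2 \<inter> W) = {}" by blast
    then have "card (Kf t1 \<inter> W) + card (Kf t2 \<inter> W) = card ((Kf t1 \<inter> W) \<union> (Kf t2 \<inter> W))"
      using finW by (simp add: card_Un_disjoint)
    also have "\<dots> \<le> card W" using finW by (intro card_mono) auto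
    finally show False using Kf[OF that(1)] Kf[OF that(2)] by linarith
  qed
  define Rm where "Rm t = ?E \<inter> (?V - {t}) \<times> (?V - {t})" for t
  have stepex: "\<exists>t'. (t, t') \<in> ?E \<and> (\<exists>u\<in>N t. (t', u) \<in> (Rm t)\<^sup>*)" if tV: "t \<in> ?V" for t
  proof -
    obtain u where u: "u \<in> N t" using Nne[OF tV] by blast
    have uV: "u \<in> ?V - {t}" using u Nt[OF tV] unfolding N_def by blast
    have "(u, t) \<in> (?E \<inter> ?V \<times> ?V)\<^sup>*" using connT uV tV unfolding connected_in_def by blast
    then obtain a b where ab: "(u, a) \<in> (?E \<inter> (?V - {t}) \<times> (?V - {t}))\<^sup>*" "(a, b) \<in> ?E" "b \<in> ?V - (?V - {t})"
      using first_exit[of u t ?E ?V "?V - {t}"] uV by blast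
    have "b = t" using ab(3) by blast
    then have "(t, a) \<in> ?E" using ab(2) symT by (auto dest: symD)
    moreover have "(a, u) \<in> (Rm t)\<^sup>*" using ab(1) rt_sym[OF symT] unfolding Rm_def by blast
    ultimately show ?thesis using u by blast
  qed
  then obtain stp where stp: "\<And>t. t \<in> ?V \<Longrightarrow> (t, stp t) \<in> ?E \<and> (\<exists>u\<in>N t. (stp t, u) \<in> (Rm t)\<^sup>*)"
    by metis
  have stpV: "stp t \<in> ?V" if "t \<in> ?V" for t using stp[OF that] graph_edge_verts[OF GT] by blast
  have nb: "stp (stp t) \<noteq> t" if tV: "t \<in> ?V" for t
  proof
    assume bk: "stp (stp t) = t"
    define t' where "t' = stp t"
    have t'V: "t' \<in> ?V" unfolding t'_def using stpV tV by blast
    have e: "(t, t') \<in> ?E" using stp[OF tV] unfolding t'_def by blast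
    obtain u1 where u1: "u1 \<in> N t" "(t', u1) \<in> (Rm t)\<^sup>*" using stp[OF tV] unfolding t'_def by blast
    obtain u2 where u2: "u2 \<in> N t'" "(t, u2) \<in> (Rm t')\<^sup>*" using stp[OF t'V] bk unfolding t'_def by auto
    obtain x where x: "x \<in> Kf t" "x \<in> Kf t'" using meet[OF tV t'V] by blast
    have "x \<in> verts H" using x Kf[OF tV] by blast
    then obtain y where y: "y \<in> ?V" "x \<in> B y" using TD unfolding tree_decomposition_def by blast
    have yN: "y \<in> N t" "y \<in> N t'" unfolding N_def using x y by auto
    have NRm: "(p, q) \<in> (Rm s)\<^sup>*" if "s \<in> ?V" "p \<in> N s" "q \<in> N s" for s p q
    proof -
      have "(p, q) \<in> (?E \<inter> N s \<times> N s)\<^sup>*" using Nconn[OF that(1)] that(2,3) unfolding connected_in_def by blast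
      then show ?thesis unfolding Rm_def by (rule rt_mono) (use Nt[OF that(1)] in \<open>auto simp: N_def\<close>)
    qed
    have p1: "(t', y) \<in> (Rm t)\<^sup>*" using u1(2) NRm[OF tV u1(1) yN(1)] by (rule rtrancl_trans)
    have p2: "(t, y) \<in> (Rm t')\<^sup>*" using u2(2) NRm[OF t'V u2(1) yN(2)] by (rule rtrancl_trans)
    let ?S = "?V - {t, t'}"
    have yS: "y \<in> ?S" using yN Nt tV t'V y(1) by auto
    have q1: "(y, t') \<in> (?E \<inter> (?V - {t}) \<times> (?V - {t}))\<^sup>*" using rt_sym[OF symT p1[unfolded Rm_def]] .
    obtain a b where ab: "(y, a) \<in> (?E \<inter> ?S \<times> ?S)\<^sup>*" "(a, b) \<in> ?E" "b \<in> (?V - {t}) - ?S"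
      using first_exit[OF q1, of ?S] yS by blast
    have "b = t'" using ab(3) by blast
    have q2: "(y, t) \<in> (?E \<inter> (?V - {t'}) \<times> (?V - {t'}))\<^sup>*" using rt_sym[OF symT p2[unfolded Rm_def]] .
    have S2: "?V - {t, t'} = (?V - {t'}) - {t}" by blast
    obtain a' b' where ab': "(y, a') \<in> (?E \<inter> ?S \<times> ?S)\<^sup>*" "(a', b') \<in> ?E" "b' \<in> (?V - {t'}) - ?S"
      using first_exit[OF q2, of ?S] yS by blast
    have "b' = t" using ab'(3) by blast
    have "(a', y) \<in> (?E \<inter> ?S \<times> ?S)\<^sup>*" using rt_sym[OF symT ab'(1)] .
    then have aa: "(a', a) \<in> (?E \<inter> ?S \<times> ?S)\<^sup>*" using ab(1) by (rule rtrancl_trans)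
    have a'S: "a' \<in> ?S" using rt_in[OF ab'(1) yS] .
    have "\<exists>vs. is_cycle T vs"
      by (rule cyc3[OF GT e _ _ aa a'S]) (use ab(2) \<open>b = t'\<close> ab'(2) \<open>b' = t\<close> in auto)
    then show False using tree unfolding is_tree_def by blast
  qed
  obtain t0 where t0: "t0 \<in> ?V" using tree unfolding is_tree_def by blast
  define w where "w i = (stp ^^ i) t0" for i
  have wV: "w i \<in> ?V" for i unfolding w_def by (induction i) (auto simp: t0 stpV)
  have "\<exists>vs. is_cycle T vs"
  proof (rule walk_cycle[OF GT])
    show "\<forall>i. w i \<in> ?V" using wV by blast
    show "\<forall>i. (w i, w (Suc i)) \<in> ?E" using stp wV unfolding w_def by simp
    show "\<forall>i. w (Suc (Suc i)) \<noteq> w i" using nb wV unfolding w_def by simp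
  qed
  then show False using tree unfolding is_tree_def by blast
qed



lemma vertsH: "verts (direct_product G K2) = verts G \<times> UNIV"
  by (simp add: direct_product_def K2_def verts_def)

lemma edgesH: "((a, i), (b, j)) \<in> edges (direct_product G K2) \<longleftrightarrow> (a, b) \<in> edges G \<and> i \<noteq> j"
  by (simp add: direct_product_def K2_def edges_def)

lemma graphH: "is_graph G \<Longrightarrow> is_graph (direct_product G K2)"
  unfolding is_graph_def vertsH
  by (auto simp: direct_product_def K2_def edges_def verts_def)

lemma sep_G:
  assumes G: "is_graph G" and TD: "tree_decomposition (direct_product G K2) T B"
    and bnd: "\<forall>t\<in>verts T. card (B t) \<le> m"
  shows "SepP G (2 * m)"
  unfolding SepP_def
proof (intro allI impI)
  fix W assume WV: "W \<subseteq> verts G"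
  let ?H = "direct_product G K2"
  let ?EG = "edges G" and ?EH = "edges ?H"
  have GH: "is_graph ?H" using G by (rule graphH)
  have finV: "finite (verts G)" using G unfolding is_graph_def by simp
  have finW: "finite W" using WV finV finite_subset by blast
  have symG: "sym ?EG" using G by (rule graph_sym)
  have symH: "sym ?EH" using GH by (rule graph_sym)
  have finB: "finite (B t)" if "t \<in> verts T" for t
  proof -
    have "B t \<subseteq> verts ?H" using TD that unfolding tree_decomposition_def by blast
    moreover have "finite (verts ?H)" using GH unfolding is_graph_def by simp
    ultimately show ?thesis by (rule finite_subset)
  qed
  let ?W1 = "W \<times> {False}"
  have cW1: "card ?W1 = card W" by (simp add: card_cartesian_product)
  obtain t1 where t1: "t1 \<in> verts T"
    "\<forall>K. K \<subseteq> verts ?H - B t1 \<longrightarrow> connected_in ?H K \<longrightarrow> 2 * card (K \<inter> ?W1) \<le> card ?W1"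
    using sep_H[OF TD GH, of ?W1] finW by blast
  define X1 where "X1 = fst ` B t1"
  have cX1: "card X1 \<le> m" unfolding X1_def using card_image_le[OF finB[OF t1(1)], of fst] bnd t1(1) by fastforce
  have X1V: "X1 \<subseteq> verts G" unfolding X1_def using TD t1(1) unfolding tree_decomposition_def vertsH by fastforce
  show "\<exists>X. X \<subseteq> verts G \<and> card X \<le> 2 * m \<and>
      (\<forall>K. K \<subseteq> verts G - X \<longrightarrow> connected_in G K \<longrightarrow> 2 * card (K \<inter> W) \<le> card W)"
  proof (cases "\<forall>K. K \<subseteq> verts G - X1 \<longrightarrow> connected_in G K \<longrightarrow> 2 * card (K \<inter> W) \<le> card W")
    case True
    then show ?thesis using X1V cX1 by (intro exI[of _ X1]) auto
  next
    case False
    then obtain K0 where K0: "K0 \<subseteq> verts G - X1" "connected_in G K0" "card W < 2 * card (K0 \<inter> W)"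
      by (auto simp: not_le)
    have "K0 \<inter> W \<noteq> {}" using K0(3) by (metis card.empty mult_0_right not_less0)
    then obtain k0 where k0: "k0 \<in> K0" by blast
    define SG where "SG = verts G - X1"
    define Kc where "Kc = cmp ?EG SG k0"
    have k0S: "k0 \<in> SG" using k0 K0(1) unfolding SG_def by blast
    have k0K: "k0 \<in> Kc" unfolding Kc_def using k0S by (rule cmp_self)
    have KcS: "Kc \<subseteq> SG" unfolding Kc_def by (rule cmp_sub)
    have maxK: "K \<subseteq> Kc" if hK: "K \<subseteq> SG" "connected_in G K" "z \<in> K" "z \<in> Kc" for K z
    proof
      fix y assume "y \<in> K"
      then have "(z, y) \<in> (?EG \<inter> K \<times> K)\<^sup>*" using hK(2,3) unfolding connected_in_def by blast
      then have "(z, y) \<in> (?EG \<inter> SG \<times> SG)\<^sup>*" by (rule rt_mono) (use hK(1) in auto)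
      moreover have "(k0, z) \<in> (?EG \<inter> SG \<times> SG)\<^sup>*" using hK(4) unfolding Kc_def cmp_def by blast
      ultimately have "(k0, y) \<in> (?EG \<inter> SG \<times> SG)\<^sup>*" by simp
      then show "y \<in> Kc" unfolding Kc_def cmp_def using \<open>y \<in> K\<close> hK(1) by blast
    qed
    have K0Kc: "K0 \<subseteq> Kc" using maxK[OF _ K0(2) k0 k0K] K0(1) unfolding SG_def by blast
    have bigKc: "card W < 2 * card (Kc \<inter> W)"
    proof -
      have "card (K0 \<inter> W) \<le> card (Kc \<inter> W)" using K0Kc finW by (intro card_mono) auto
      then show ?thesis using K0(3) by linarith
    qed
    define P where "P = Kc \<times> (UNIV :: bool set)"
    define L where "L = cmp ?EH P (k0, False)"
    have k0P: "(k0, False) \<in> P" unfolding P_def using k0K by simp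
    have k0L: "(k0, False) \<in> L" unfolding L_def using k0P by (rule cmp_self)
    have LP: "L \<subseteq> P" unfolding L_def by (rule cmp_sub)
    have Lconn: "connected_in ?H L" unfolding L_def using cmp_conn[OF symH k0P] .
    have Lsub: "L \<subseteq> verts ?H - B t1"
    proof
      fix z assume "z \<in> L"
      then have "fst z \<in> Kc" using LP unfolding P_def by auto
      then have "fst z \<in> verts G" "fst z \<notin> X1" using KcS unfolding SG_def by auto
      then show "z \<in> verts ?H - B t1" unfolding vertsH X1_def by (cases z) force
    qed
    have Lclosed: "(b, j) \<in> L" if "(a, i) \<in> L" "(a, b) \<in> ?EG" "b \<in> Kc" "i \<noteq> j" for a b i j
    proof -
      have "((a, i), (b, j)) \<in> ?EH" using that(2,4) by (simp add: edgesH)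
      moreover have "(b, j) \<in> P" using that(3) unfolding P_def by simp
      ultimately show ?thesis using that(1) cmp_closed unfolding L_def by fast
    qed
    have lift: "\<exists>i. (a, i) \<in> L" if "(k0, a) \<in> (?EG \<inter> Kc \<times> Kc)\<^sup>*" for a
      using that
    proof (induction rule: rtrancl_induct)
      case base then show ?case using k0L by blast
    next
      case (step a b)
      then obtain i where "(a, i) \<in> L" by blast
      then have "(b, \<not> i) \<in> L" using Lclosed[of a i b "\<not> i"] step.hyps(2) by blast
      then show ?case by blast
    qed
    have allK: "\<exists>i. (a, i) \<in> L" if "a \<in> Kc" for a
    proof -
      have "(k0, a) \<in> (?EG \<inter> SG \<times> SG)\<^sup>*" using that unfolding Kc_def cmp_def by blast
      then have "(k0, a) \<in> (?EG \<inter> Kc \<times> Kc)\<^sup>*" using reach_sub[OF k0S] unfolding Kc_def cmp_def by blast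
      then show ?thesis by (rule lift)
    qed
    define fl where "fl z = (fst z, \<not> snd z)" for z :: "'a \<times> bool"
    have flip: "(fl z1, fl z2) \<in> (?EH \<inter> P \<times> P)\<^sup>*" if "(z1, z2) \<in> (?EH \<inter> P \<times> P)\<^sup>*" for z1 z2
      using that
    proof (induction rule: rtrancl_induct)
      case base then show ?case by simp
    next
      case (step y z)
      have "(fl y, fl z) \<in> ?EH \<inter> P \<times> P"
        using step.hyps(2) unfolding fl_def P_def by (cases y; cases z) (auto simp: edgesH)
      with step.IH show ?case by (rule rtrancl_into_rtrancl)
    qed
    have Lmem: "z \<in> L \<longleftrightarrow> z \<in> P \<and> ((k0, False), z) \<in> (?EH \<inter> P \<times> P)\<^sup>*" for z
      unfolding L_def cmp_def by simp
    have both: "(k0, True) \<in> L" if "(a, False) \<in> L" "(a, True) \<in> L" for a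
    proof -
      have p1: "((k0, False), (a, False)) \<in> (?EH \<inter> P \<times> P)\<^sup>*" using that(1) Lmem[of "(a, False)"] by simp
      have "((k0, False), (a, True)) \<in> (?EH \<inter> P \<times> P)\<^sup>*" using that(2) Lmem[of "(a, True)"] by simp
      then have "((k0, True), (a, False)) \<in> (?EH \<inter> P \<times> P)\<^sup>*" using flip[of "(k0, False)" "(a, True)"] unfolding fl_def by simp
      then have "((a, False), (k0, True)) \<in> (?EH \<inter> P \<times> P)\<^sup>*" using rt_sym[OF symH] by blast
      then have "((k0, False), (k0, True)) \<in> (?EH \<inter> P \<times> P)\<^sup>*" using p1 by simp
      moreover have "(k0, True) \<in> P" unfolding P_def using k0K by simp
      ultimately show ?thesis using Lmem[of "(k0, True)"] by simp
    qed
    show ?thesis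
    proof (cases "(k0, True) \<in> L")
      case True
      have "(a, False) \<in> L" if aK: "a \<in> Kc" for a
      proof -
        obtain i where i: "(a, i) \<in> L" using allK[OF aK] by blast
        show ?thesis
        proof (cases i)
          case False then show ?thesis using i by simp
        next
          case ii: True
          have "((k0, False), (a, True)) \<in> (?EH \<inter> P \<times> P)\<^sup>*" using i ii Lmem[of "(a, True)"] by simp
          then have "((k0, True), (a, False)) \<in> (?EH \<inter> P \<times> P)\<^sup>*" using flip[of "(k0, False)" "(a, True)"] unfolding fl_def by simp
          moreover have "((k0, False), (k0, True)) \<in> (?EH \<inter> P \<times> P)\<^sup>*" using True Lmem[of "(k0, True)"] by simp
          ultimately have "((k0, False), (a, False)) \<in> (?EH \<inter> P \<times> P)\<^sup>*" by simp
          moreover have "(a, False) \<in> P" using aK unfolding P_def by simp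
          ultimately show ?thesis using Lmem[of "(a, False)"] by simp
        qed
      qed
      then have sub: "(Kc \<inter> W) \<times> {False} \<subseteq> L \<inter> ?W1" by auto
      have "card ((Kc \<inter> W) \<times> {False}) \<le> card (L \<inter> ?W1)"
        using sub finW by (intro card_mono) auto
      moreover have "card ((Kc \<inter> W) \<times> {False}) = card (Kc \<inter> W)" by (simp add: card_cartesian_product)
      moreover have "2 * card (L \<inter> ?W1) \<le> card ?W1" using t1(2) Lsub Lconn by blast
      ultimately show ?thesis using cW1 bigKc by linarith
    next
      case False
      define c where "c a = ((a, True) \<in> L)" for a
      define phi where "phi a = (a, c a)" for a
      have phiL: "phi a \<in> L" if aK: "a \<in> Kc" for a
      proof -
        obtain i where "(a, i) \<in> L" using allK[OF aK] by blast
        then show ?thesis unfolding phi_def c_def by (cases i; cases "(a, True) \<in> L") auto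
      qed
      have phiE: "(phi a, phi b) \<in> ?EH" if hab: "a \<in> Kc" "b \<in> Kc" "(a, b) \<in> ?EG" for a b
      proof -
        have "(b, \<not> c a) \<in> L" using Lclosed[of a "c a" b "\<not> c a"] phiL[OF hab(1)] hab unfolding phi_def by simp
        moreover have "(b, c b) \<in> L" using phiL[OF hab(2)] unfolding phi_def by simp
        ultimately have "c b = (\<not> c a)" using both[of b] False by (cases "c a"; cases "c b") auto
        then show ?thesis using hab(3) unfolding phi_def by (simp add: edgesH)
      qed
      have injphi: "inj phi" unfolding phi_def inj_def by simp
      have injS: "inj_on phi S" for S using injphi by (rule inj_on_subset) simp
      define W2 where "W2 = phi ` (Kc \<inter> W)"
      have finW2: "finite W2" unfolding W2_def using finW by simp
      obtain t2 where t2: "t2 \<in> verts T"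
        "\<forall>K. K \<subseteq> verts ?H - B t2 \<longrightarrow> connected_in ?H K \<longrightarrow> 2 * card (K \<inter> W2) \<le> card W2"
        using sep_H[OF TD GH finW2] by blast
      define X2 where "X2 = fst ` B t2"
      have cX2: "card X2 \<le> m" unfolding X2_def using card_image_le[OF finB[OF t2(1)], of fst] bnd t2(1) by fastforce
      have X2V: "X2 \<subseteq> verts G" unfolding X2_def using TD t2(1) unfolding tree_decomposition_def vertsH by fastforce
      have cX: "card (X1 \<union> X2) \<le> 2 * m" using card_Un_le[of X1 X2] cX1 cX2 by linarith
      have "\<forall>K. K \<subseteq> verts G - (X1 \<union> X2) \<longrightarrow> connected_in G K \<longrightarrow> 2 * card (K \<inter> W) \<le> card W"
      proof (intro allI impI)
        fix K assume KV: "K \<subseteq> verts G - (X1 \<union> X2)" and KC: "connected_in G K"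
        show "2 * card (K \<inter> W) \<le> card W"
        proof (cases "K \<inter> Kc = {}")
          case True
          then have "(K \<inter> W) \<inter> (Kc \<inter> W) = {}" by blast
          then have "card (K \<inter> W) + card (Kc \<inter> W) = card ((K \<inter> W) \<union> (Kc \<inter> W))"
            using finW by (simp add: card_Un_disjoint)
          also have "\<dots> \<le> card W" using finW by (intro card_mono) auto
          finally show ?thesis using bigKc by linarith
        next
          case False
          then obtain z where "z \<in> K" "z \<in> Kc" by blast
          have KKc: "K \<subseteq> Kc" by (rule maxK[OF _ KC \<open>z \<in> K\<close> \<open>z \<in> Kc\<close>]) (use KV in \<open>auto simp: SG_def\<close>)
          have pc: "(phi x, phi y) \<in> (?EH \<inter> phi ` K \<times> phi ` K)\<^sup>*" if "(x, y) \<in> (?EG \<inter> K \<times> K)\<^sup>*" for x y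
            using that
          proof (induction rule: rtrancl_induct)
            case base then show ?case by simp
          next
            case (step y z)
            then have "(phi y, phi z) \<in> ?EH \<inter> phi ` K \<times> phi ` K" using phiE KKc by blast
            with step.IH show ?case by (rule rtrancl_into_rtrancl)
          qed
          have Cphi: "connected_in ?H (phi ` K)"
            unfolding connected_in_def
          proof (intro ballI)
            fix p q assume "p \<in> phi ` K" "q \<in> phi ` K"
            then obtain x y where xy: "x \<in> K" "y \<in> K" "p = phi x" "q = phi y" by blast
            then have "(x, y) \<in> (?EG \<inter> K \<times> K)\<^sup>*" using KC unfolding connected_in_def by blast
            then show "(p, q) \<in> (?EH \<inter> phi ` K \<times> phi ` K)\<^sup>*" using pc xy by blast
          qed
          have Sphi: "phi ` K \<subseteq> verts ?H - B t2"
          proof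
            fix p assume "p \<in> phi ` K"
            then obtain a where a: "a \<in> K" "p = phi a" by blast
            have "a \<in> verts G" "a \<notin> X2" using a KV by auto
            then show "p \<in> verts ?H - B t2" using a unfolding phi_def vertsH X2_def by force
          qed
          have "2 * card (phi ` K \<inter> W2) \<le> card W2" using t2(2) Sphi Cphi by blast
          moreover have "phi ` K \<inter> W2 = phi ` (K \<inter> W)" unfolding W2_def
          proof -
            have "phi ` K \<inter> phi ` (Kc \<inter> W) = phi ` (K \<inter> (Kc \<inter> W))" using image_Int[OF injphi] by metis
            moreover have "K \<inter> (Kc \<inter> W) = K \<inter> W" using KKc by blast
            ultimately show "phi ` K \<inter> phi ` (Kc \<inter> W) = phi ` (K \<inter> W)" by simp
          qed
          moreover have "card (phi ` (K \<inter> W)) = card (K \<inter> W)" by (rule card_image[OF injS])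
          moreover have "card W2 = card (Kc \<inter> W)" unfolding W2_def by (rule card_image[OF injS])
          moreover have "card (Kc \<inter> W) \<le> card W" using finW by (intro card_mono) auto
          ultimately show ?thesis by simp
        qed
      qed
      then show ?thesis using X1V X2V cX by (intro exI[of _ "X1 \<union> X2"]) auto
    qed
  qed
qed



lemma tdec_td: "tdec (edges G) (verts G) T B \<Longrightarrow> is_graph G \<Longrightarrow> tree_decomposition G T B"
  unfolding tdec_def tree_decomposition_def is_graph_def by blast

lemma width_le: "tree_decomposition G T B \<Longrightarrow> t \<in> verts T \<Longrightarrow> card (B t) \<le> decomp_width T B + 1"
proof -
  assume TD: "tree_decomposition G T B" and t: "t \<in> verts T"
  have "finite (verts T)" using TD unfolding tree_decomposition_def is_tree_def is_graph_def by blast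
  then have "card (B t) \<le> Max ((\<lambda>t. card (B t)) ` verts T)" using t by (intro Max_ge) auto
  then show ?thesis unfolding decomp_width_def by linarith
qed

lemma width_ge: "tree_decomposition G T B \<Longrightarrow> \<forall>t\<in>verts T. card (B t) \<le> m + 1 \<Longrightarrow> decomp_width T B \<le> m"
proof -
  assume TD: "tree_decomposition G T B" and b: "\<forall>t\<in>verts T. card (B t) \<le> m + 1"
  have "finite (verts T)" "verts T \<noteq> {}" using TD unfolding tree_decomposition_def is_tree_def is_graph_def by blast+
  then have "Max ((\<lambda>t. card (B t)) ` verts T) \<le> m + 1" using b by (subst Max_le_iff) auto
  then show ?thesis unfolding decomp_width_def by linarith
qed

lemma tw_bound:
  assumes G: "is_graph G"
  shows "treewidth G \<le> 8 * treewidth (direct_product G K2) + 8"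
proof -
  let ?H = "direct_product G K2"
  have GH: "is_graph ?H" using G by (rule graphH)
  have "tdec (edges ?H) (verts ?H) ({0}, {}) (\<lambda>_. verts ?H)" by (rule tdec_single)
  then have "tree_decomposition ?H ({0}, {}) (\<lambda>_. verts ?H)" using GH by (rule tdec_td)
  then have ex: "\<exists>w T B. tree_decomposition ?H T B \<and> decomp_width T B = w" by blast
  define w where "w = treewidth ?H"
  have "\<exists>T B. tree_decomposition ?H T B \<and> decomp_width T B = w"
    unfolding w_def treewidth_def by (rule LeastI_ex[OF ex])
  then obtain T B where TB: "tree_decomposition ?H T B" "decomp_width T B = w" by blast
  have bnd: "\<forall>t\<in>verts T. card (B t) \<le> w + 1" using width_le[OF TB(1)] TB(2) by auto
  have sep: "SepP G (2 * (w + 1))" using sep_G[OF G TB(1) bnd] .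
  have "\<exists>T B. tdec (edges G) (verts G) T B \<and> (\<forall>t\<in>verts T. card (B t) \<le> 4 * (2 * (w + 1)) + 1) \<and> (\<exists>t\<in>verts T. {} \<subseteq> B t)"
    by (rule rec_main[OF G sep]) (use G in \<open>auto simp: is_graph_def\<close>)
  then obtain T' B' where D: "tdec (edges G) (verts G) T' B'" "\<forall>t\<in>verts T'. card (B' t) \<le> 4 * (2 * (w + 1)) + 1"
    by blast
  have TD': "tree_decomposition G T' B'" using D(1) G by (rule tdec_td)
  have dw: "decomp_width T' B' \<le> 8 * w + 8" using width_ge[OF TD'] D(2) by simp
  have "treewidth G \<le> decomp_width T' B'"
    unfolding treewidth_def by (rule Least_le) (use TD' in blast)
  then show ?thesis using dw unfolding w_def by simp
qed

lemma ln_ge_half: "(1/2::real) \<le> ln 2"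
proof -
  have "exp (1/2::real) * exp (1/2) = exp 1" by (simp add: exp_add[symmetric])
  then have "exp (1/2::real) * exp (1/2) \<le> 3" using exp_le by simp
  then have "exp (1/2::real) \<le> 2"
  proof (rule contrapos_pp)
    assume "\<not> exp (1/2::real) \<le> 2"
    then have "2 < exp (1/2::real)" by simp
    then have "2 * 2 < exp (1/2::real) * exp (1/2)" by (intro mult_strict_mono) auto
    then show "\<not> exp (1/2::real) * exp (1/2) \<le> 3" by simp
  qed
  then show ?thesis by (subst ln_ge_iff) auto
qed

lemma powr_bound: assumes "(1/2::real) \<le> x" shows "1/8 \<le> x powr (5/2)"
proof -
  have x0: "0 < x" using assms by simp
  have "x powr (5/2) = x powr 2 * x powr (1/2)" by (simp add: powr_add[symmetric])
  also have "\<dots> = x^2 * sqrt x" using x0 by (simp add: powr_half_sqrt)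
  finally have e: "x powr (5/2) = x^2 * sqrt x" .
  have "(1/2)^2 \<le> x^2" by (rule power_mono) (use assms in auto)
  then have "1/4 \<le> x^2" by (simp add: power2_eq_square)
  moreover have "1/2 \<le> sqrt x"
  proof -
    have "sqrt (1/4) \<le> sqrt x" using assms by (intro real_sqrt_le_mono) simp
    moreover have "sqrt (1/4::real) = 1/2" by (simp add: real_sqrt_divide)
    ultimately show ?thesis by simp
  qed
  ultimately have "1/4 * (1/2) \<le> x^2 * sqrt x" by (intro mult_mono) auto
  then show ?thesis using e by simp
qed

theorem mainTheorem15:
  shows "\<exists>c::real. c > 0 \<and>
    (\<forall>(k::nat) (G::nat graph). k \<ge> 2 \<longrightarrow> is_graph G \<longrightarrow>
       real (treewidth G) \<ge> c * real k ^ 4 * ln (real k) powr (5/2) \<longrightarrow>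
       treewidth (direct_product G K2) \<ge> k)"
proof (intro exI[of _ 1000] conjI allI impI)
  show "(1000::real) > 0" by simp
next
  fix k :: nat and G :: "nat graph"
  assume k: "k \<ge> 2" and G: "is_graph G" and tw: "real (treewidth G) \<ge> 1000 * real k ^ 4 * ln (real k) powr (5/2)"
  show "treewidth (direct_product G K2) \<ge> k"
  proof (rule ccontr)
    assume "\<not> ?thesis"
    then have "treewidth (direct_product G K2) + 1 \<le> k" by simp
    then have "treewidth G \<le> 8 * k" using tw_bound[OF G] by linarith
    then have a: "real (treewidth G) \<le> 8 * real k" by simp
    have "ln 2 \<le> ln (real k)" using k by (subst ln_le_cancel_iff) auto
    then have "1/2 \<le> ln (real k)" using ln_ge_half by linarith
    then have L: "1/8 \<le> ln (real k) powr (5/2)" by (rule powr_bound)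
    have "real k ^ 1 \<le> real k ^ 4" by (rule power_increasing) (use k in auto)
    then have kk: "real k \<le> real k ^ 4" by simp
    have "1000 * real k ^ 4 * (1/8) \<le> 1000 * real k ^ 4 * ln (real k) powr (5/2)"
      using L by (intro mult_left_mono) auto
    then have "125 * real k ^ 4 \<le> 8 * real k" using tw a by linarith
    then show False using kk k by linarith
  qed
qed

end
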